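(* Let $\mathcal E$ be a nonlinear Dirichlet form on $L^2(\mu)$ satisfying the weak $\Delta_2$-condition. The following are equivalent: (i) $\mathcal E$ is critical; (ii) $1\in M(\mathcal E_e)$ and $\|1\|_{L_e}=0$; (iii) there exists a sequence $(e_n)$ in $M(\mathcal E)$ with $0\le e_n\le1$, $e_n\to1$ locally in measure and $\|e_n\|_L\to0$.
   Context: $(X,\mathfrak A,\mu)$ is $\sigma$-finite; $L^0(\mu)$ carries local convergence in measure. A nonlinear Dirichlet form is a lower semicontinuous convex $\mathcal E\colon L^2(\mu)\to[0,\infty]$ with $\mathcal E(-f)=\mathcal E(f)$, $\mathcal E(0)=0$, such that $\mathcal E(f+Cg)+\mathcal E(f-Cg)\le\mathcal E(f+g)+\mathcal E(f-g)$ for all $f,g$ and all 1-Lipschitz $C\colon\mathbb R\to\mathbb R$ with $C(0)=0$. Weak $\Delta_2$-condition: $\mathcal E(f_n)\to0$ implies $\mathcal E(2f_n)\to0$. $M(\mathcal E)$, $\|\cdot\|_L$: modular space $\{f:\lim_{\lambda\to0+}\mathcal E(\lambda f)=0\}$ and Luxemburg seminorm $\inf\{\lambda>0:\mathcal E(\lambda^{-1}f)\le1\}$; $\mathcal E_e$ is the lower semicontinuous relaxation on $L^0(\mu)$ of $\mathcal E$ extended by $+\infty$, with $M(\mathcal E_e)$, $\|\cdot\|_{L_e}$ analogous. Resolvent $G_\alpha f$ minimizes $g\mapsto\mathcal E(g)+\frac\alpha2\|g-\alpha^{-1}f\|_2^2$, extended to nonnegative functions by monotone limits; Green operator $Gf=\lim_{\alpha\to0+}G_\alpha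 f$. $\mathcal E$ is critical if for every $f\in L^1_+(\mu)$ one has $\mu(\{f>0\}\cap\{Gf<\infty\})=0$. *)

theory Defs
  imports "HOL-Analysis.Analysis"
begin

definition L2 :: "'a measure \<Rightarrow> ('a \<Rightarrow> real) \<Rightarrow> bool" where
  "L2 M f \<longleftrightarrow> f \<in> borel_measurable M \<and> integrable M (\<lambda>x. (f x)\<^sup>2)"

definition conv_loc_meas :: "'a measure \<Rightarrow> (nat \<Rightarrow> 'a \<Rightarrow> real) \<Rightarrow> ('a \<Rightarrow> real) \<Rightarrow> bool" where
  "conv_loc_meas M fs f \<longleftrightarrow>
     (\<forall>A\<in>sets M. emeasure M A < \<infinity> \<longrightarrow> (\<forall>\<epsilon>>0.
        (\<lambda>n. emeasure M (A \<inter> {x\<in>space M. \<bar>fs n x - f x\<bar> > \<epsilon>})) \<longlonglongrightarrow> 0))"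

text \<open>Nonlinear Dirichlet form on L^2(M); E is defined on representatives and must
  respect a.e. equality.\<close>
definition nonlinear_dirichlet_form :: "'a measure \<Rightarrow> (('a \<Rightarrow> real) \<Rightarrow> ennreal) \<Rightarrow> bool" where
  "nonlinear_dirichlet_form M E \<longleftrightarrow>
     (\<forall>f g. L2 M f \<and> L2 M g \<and> (AE x in M. f x = g x) \<longrightarrow> E f = E g) \<and>
     (\<forall>fs f. (\<forall>n. L2 M (fs n)) \<and> L2 M f \<and>
        (\<lambda>n. integral\<^sup>L M (\<lambda>x. (fs n x - f x)\<^sup>2)) \<longlonglongrightarrow> 0
        \<longrightarrow> E f \<le> liminf (\<lambda>n. E (fs n))) \<and>
     (\<forall>f g (t::real). L2 M f \<and> L2 M g \<and> 0 \<le> t \<and> t \<le> 1 \<longrightarrow>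
        E (\<lambda>x. t * f x + (1 - t) * g x) \<le> ennreal t * E f + ennreal (1 - t) * E g) \<and>
     (\<forall>f. L2 M f \<longrightarrow> E (\<lambda>x. - f x) = E f) \<and>
     E (\<lambda>x. 0) = 0 \<and>
     (\<forall>f g (C::real \<Rightarrow> real). L2 M f \<and> L2 M g \<and> C 0 = 0 \<and>
        (\<forall>s t. \<bar>C s - C t\<bar> \<le> \<bar>s - t\<bar>) \<longrightarrow>
        E (\<lambda>x. f x + C (g x)) + E (\<lambda>x. f x - C (g x))
          \<le> E (\<lambda>x. f x + g x) + E (\<lambda>x. f x - g x))"

definition weak_Delta2 :: "'a measure \<Rightarrow> (('a \<Rightarrow> real) \<Rightarrow> ennreal) \<Rightarrow> bool" where
  "weak_Delta2 M E \<longleftrightarrow>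
     (\<forall>fs. (\<forall>n. L2 M (fs n)) \<and> (\<lambda>n. E (fs n)) \<longlonglongrightarrow> 0
        \<longrightarrow> (\<lambda>n. E (\<lambda>x. 2 * fs n x)) \<longlonglongrightarrow> 0)"

definition modular_space :: "'a measure \<Rightarrow> (('a \<Rightarrow> real) \<Rightarrow> ennreal) \<Rightarrow> ('a \<Rightarrow> real) set" where
  "modular_space M E = {f. L2 M f \<and> ((\<lambda>t. E (\<lambda>x. t * f x)) \<longlongrightarrow> 0) (at_right 0)}"

definition luxemburg :: "(('a \<Rightarrow> real) \<Rightarrow> ennreal) \<Rightarrow> ('a \<Rightarrow> real) \<Rightarrow> real" where
  "luxemburg E f = Inf {s::real. s > 0 \<and> E (\<lambda>x. f x / s) \<le> 1}"

text \<open>E extended by +infinity outside L^2, and its lower semicontinuous relaxation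
  on L^0 w.r.t. local convergence in measure (sequential form; this topology is
  metrizable for sigma-finite measures).\<close>
definition E_ext :: "'a measure \<Rightarrow> (('a \<Rightarrow> real) \<Rightarrow> ennreal) \<Rightarrow> ('a \<Rightarrow> real) \<Rightarrow> ennreal" where
  "E_ext M E f = (if L2 M f then E f else \<infinity>)"

definition E_e :: "'a measure \<Rightarrow> (('a \<Rightarrow> real) \<Rightarrow> ennreal) \<Rightarrow> ('a \<Rightarrow> real) \<Rightarrow> ennreal" where
  "E_e M E f = (INF fs \<in> {fs. (\<forall>n. fs n \<in> borel_measurable M) \<and> conv_loc_meas M fs f}.
                  liminf (\<lambda>n. E_ext M E (fs n)))"

definition modular_space_e :: "'a measure \<Rightarrow> (('a \<Rightarrow> real) \<Rightarrow> ennreal) \<Rightarrow> ('a \<Rightarrow> real) set" where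
  "modular_space_e M E = {f. f \<in> borel_measurable M \<and>
      ((\<lambda>t. E_e M E (\<lambda>x. t * f x)) \<longlongrightarrow> 0) (at_right 0)}"

definition resolvent :: "'a measure \<Rightarrow> (('a \<Rightarrow> real) \<Rightarrow> ennreal) \<Rightarrow> real \<Rightarrow> ('a \<Rightarrow> real) \<Rightarrow> ('a \<Rightarrow> real)" where
  "resolvent M E \<alpha> f = (SOME h. L2 M h \<and> (\<forall>k. L2 M k \<longrightarrow>
      E h + ennreal (\<alpha> / 2 * integral\<^sup>L M (\<lambda>x. (h x - f x / \<alpha>)\<^sup>2))
      \<le> E k + ennreal (\<alpha> / 2 * integral\<^sup>L M (\<lambda>x. (k x - f x / \<alpha>)\<^sup>2))))"

text \<open>Extension to nonnegative f \<in> L^1 by monotone limits along min f n \<in> L^2.\<close>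
definition resolvent_pos :: "'a measure \<Rightarrow> (('a \<Rightarrow> real) \<Rightarrow> ennreal) \<Rightarrow> real \<Rightarrow> ('a \<Rightarrow> real) \<Rightarrow> 'a \<Rightarrow> ereal" where
  "resolvent_pos M E \<alpha> f x = (SUP n::nat. ereal (resolvent M E \<alpha> (\<lambda>y. min (f y) (real n)) x))"

text \<open>Green operator: limit as alpha \<rightarrow> 0+, taken along alpha = 1/(k+1).\<close>
definition green :: "'a measure \<Rightarrow> (('a \<Rightarrow> real) \<Rightarrow> ennreal) \<Rightarrow> ('a \<Rightarrow> real) \<Rightarrow> 'a \<Rightarrow> ereal" where
  "green M E f x = liminf (\<lambda>k::nat. resolvent_pos M E (1 / real (Suc k)) f x)"

definition critical :: "'a measure \<Rightarrow> (('a \<Rightarrow> real) \<Rightarrow> ennreal) \<Rightarrow> bool" where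
  "critical M E \<longleftrightarrow>
     (\<forall>f. f \<in> borel_measurable M \<and> integrable M f \<and> (\<forall>x\<in>space M. 0 \<le> f x) \<longrightarrow>
        (AE x in M. \<not> (0 < f x \<and> green M E f x < \<infinity>)))"

end

theory Submission
  imports Defs
begin

lemma sq_bound_aux: fixes a b g :: real
  assumes "\<bar>g\<bar> \<le> \<bar>a\<bar> + \<bar>b\<bar>" shows "g\<^sup>2 \<le> 2 * a\<^sup>2 + 2 * b\<^sup>2"
proof -
  have "g\<^sup>2 = \<bar>g\<bar>\<^sup>2" by simp
  also have "\<dots> \<le> (\<bar>a\<bar> + \<bar>b\<bar>)\<^sup>2" using assms by (intro power_mono) auto
  also have "\<dots> \<le> 2 * \<bar>a\<bar>\<^sup>2 + 2 * \<bar>b\<bar>\<^sup>2"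
  proof -
    have "0 \<le> (\<bar>a\<bar> - \<bar>b\<bar>)\<^sup>2" by simp
    then show ?thesis by (simp add: power2_eq_square algebra_simps)
  qed
  finally show ?thesis by simp
qed

lemma prod_bound_aux: fixes a b :: real shows "\<bar>a * b\<bar> \<le> a\<^sup>2 + b\<^sup>2"
proof -
  have "0 \<le> (\<bar>a\<bar> - \<bar>b\<bar>)\<^sup>2" by simp
  then have "2 * (\<bar>a\<bar> * \<bar>b\<bar>) \<le> \<bar>a\<bar>\<^sup>2 + \<bar>b\<bar>\<^sup>2" by (simp add: power2_eq_square algebra_simps)
  moreover have "0 \<le> \<bar>a\<bar> * \<bar>b\<bar>" by simp
  moreover have "\<bar>a * b\<bar> = \<bar>a\<bar> * \<bar>b\<bar>" by (simp add: abs_mult)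
  moreover have "\<bar>a\<bar>\<^sup>2 = a\<^sup>2" "\<bar>b\<bar>\<^sup>2 = b\<^sup>2" by simp_all
  ultimately show ?thesis by linarith
qed

lemma L2_measurable: "L2 M f \<Longrightarrow> f \<in> borel_measurable M"
  by (simp add: L2_def)

lemma L2_sq_int: "L2 M f \<Longrightarrow> integrable M (\<lambda>x. (f x)\<^sup>2)"
  by (simp add: L2_def)

lemma L2_bound2:
  assumes "g \<in> borel_measurable M" "L2 M f1" "L2 M f2"
    and "\<And>x. x \<in> space M \<Longrightarrow> \<bar>g x\<bar> \<le> \<bar>f1 x\<bar> + \<bar>f2 x\<bar>"
  shows "L2 M g"
proof -
  have i: "integrable M (\<lambda>x. 2 * (f1 x)\<^sup>2 + 2 * (f2 x)\<^sup>2)"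
    using assms(2,3) unfolding L2_def by auto
  have "AE x in M. norm ((g x)\<^sup>2) \<le> norm (2 * (f1 x)\<^sup>2 + 2 * (f2 x)\<^sup>2)"
    using sq_bound_aux[OF assms(4)] by (intro AE_I2) simp
  moreover have "(\<lambda>x. (g x)\<^sup>2) \<in> borel_measurable M" using assms(1) by measurable
  ultimately have "integrable M (\<lambda>x. (g x)\<^sup>2)"
    by (intro Bochner_Integration.integrable_bound[OF i]) auto
  then show ?thesis using assms(1) unfolding L2_def by blast
qed

lemma L2_bound:
  assumes "g \<in> borel_measurable M" "L2 M f"
    and "\<And>x. x \<in> space M \<Longrightarrow> \<bar>g x\<bar> \<le> \<bar>f x\<bar>"
  shows "L2 M g"
proof (rule L2_bound2[OF assms(1,2,2)])
  fix x assume "x \<in> space M" then show "\<bar>g x\<bar> \<le> \<bar>f x\<bar> + \<bar>f x\<bar>" using assms(3) by force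
qed


lemma L2_zero[simp]: "L2 M (\<lambda>x. 0)"
  by (simp add: L2_def)

lemma L2_add: "L2 M f \<Longrightarrow> L2 M g \<Longrightarrow> L2 M (\<lambda>x. f x + g x)"
  by (rule L2_bound2[of _ M f g]) (auto simp: L2_def)

lemma L2_diff: "L2 M f \<Longrightarrow> L2 M g \<Longrightarrow> L2 M (\<lambda>x. f x - g x)"
  by (rule L2_bound2[of _ M f g]) (auto simp: L2_def)

lemma L2_cmult: "L2 M f \<Longrightarrow> L2 M (\<lambda>x. c * f x)"
  by (auto simp: L2_def power_mult_distrib)

lemma L2_divide: "L2 M f \<Longrightarrow> L2 M (\<lambda>x. f x / c)"
  using L2_cmult[of M f "1/c"] by simp

lemma L2_uminus: "L2 M f \<Longrightarrow> L2 M (\<lambda>x. - f x)"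
  using L2_cmult[of M f "-1"] by simp

lemma L2_max: "L2 M f \<Longrightarrow> L2 M g \<Longrightarrow> L2 M (\<lambda>x. max (f x) (g x))"
  by (rule L2_bound2[of _ M f g]) (auto simp: L2_def)

lemma L2_min: "L2 M f \<Longrightarrow> L2 M g \<Longrightarrow> L2 M (\<lambda>x. min (f x) (g x))"
  by (rule L2_bound2[of _ M f g]) (auto simp: L2_def)

lemma L2_mult_int:
  assumes "L2 M f" "L2 M g"
  shows "integrable M (\<lambda>x. f x * g x)"
proof -
  have i: "integrable M (\<lambda>x. (f x)\<^sup>2 + (g x)\<^sup>2)"
    using assms by (auto simp: L2_def)
  have "AE x in M. norm (f x * g x) \<le> norm ((f x)\<^sup>2 + (g x)\<^sup>2)"
    using prod_bound_aux by (intro AE_I2) simp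
  moreover have "(\<lambda>x. f x * g x) \<in> borel_measurable M" using assms by (auto simp: L2_def)
  ultimately show ?thesis by (rule Bochner_Integration.integrable_bound[OF i, rotated])
qed


locale ndf = sigma_finite_measure M for M :: "'a measure" +
  fixes E :: "('a \<Rightarrow> real) \<Rightarrow> ennreal"
  assumes ndf: "nonlinear_dirichlet_form M E"
begin

lemma E_ae: "L2 M f \<Longrightarrow> L2 M g \<Longrightarrow> (AE x in M. f x = g x) \<Longrightarrow> E f = E g"
  using ndf unfolding nonlinear_dirichlet_form_def by blast

lemma E_lsc: "(\<And>n. L2 M (fs n)) \<Longrightarrow> L2 M f \<Longrightarrow>
   (\<lambda>n. integral\<^sup>L M (\<lambda>x. (fs n x - f x)\<^sup>2)) \<longlonglongrightarrow> 0 \<Longrightarrow> E f \<le> liminf (\<lambda>n. E (fs n))"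
  using ndf unfolding nonlinear_dirichlet_form_def by blast

lemma E_convex: "L2 M f \<Longrightarrow> L2 M g \<Longrightarrow> 0 \<le> t \<Longrightarrow> t \<le> 1 \<Longrightarrow>
   E (\<lambda>x. t * f x + (1 - t) * g x) \<le> ennreal t * E f + ennreal (1 - t) * E g"
  using ndf unfolding nonlinear_dirichlet_form_def by blast

lemma E_sym: "L2 M f \<Longrightarrow> E (\<lambda>x. - f x) = E f"
  using ndf unfolding nonlinear_dirichlet_form_def by blast

lemma E_zero[simp]: "E (\<lambda>x. 0) = 0"
  using ndf unfolding nonlinear_dirichlet_form_def by blast

lemma E_contr: "L2 M f \<Longrightarrow> L2 M g \<Longrightarrow> C 0 = 0 \<Longrightarrow> (\<And>s t. \<bar>C s - C t\<bar> \<le> \<bar>s - t\<bar>) \<Longrightarrow>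
   E (\<lambda>x. f x + C (g x)) + E (\<lambda>x. f x - C (g x)) \<le> E (\<lambda>x. f x + g x) + E (\<lambda>x. f x - g x)"
  using ndf unfolding nonlinear_dirichlet_form_def by blast

lemma ennreal_double_le: fixes a b :: ennreal shows "a + a \<le> b + b \<Longrightarrow> a \<le> b"
  using add_strict_mono[of b a b a] by (metis not_le)

lemma E_scale: "L2 M f \<Longrightarrow> 0 \<le> t \<Longrightarrow> t \<le> 1 \<Longrightarrow> E (\<lambda>x. t * f x) \<le> ennreal t * E f"
  using E_convex[of f "\<lambda>x. 0" t] by simp

lemma E_contraction:
  assumes f: "L2 M f" and C: "C 0 = 0" "\<And>s t. \<bar>C s - C t\<bar> \<le> \<bar>s - t\<bar>"
    and meas: "(\<lambda>x. C (f x)) \<in> borel_measurable M"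
  shows "E (\<lambda>x. C (f x)) \<le> E f"
proof -
  have L: "L2 M (\<lambda>x. C (f x))"
  proof (rule L2_bound[OF meas f])
    fix x show "\<bar>C (f x)\<bar> \<le> \<bar>f x\<bar>" using C(2)[of "f x" 0] C(1) by simp
  qed
  have "E (\<lambda>x. 0 + C (f x)) + E (\<lambda>x. 0 - C (f x)) \<le> E (\<lambda>x. 0 + f x) + E (\<lambda>x. 0 - f x)"
    by (rule E_contr[OF L2_zero f C])
  then have "E (\<lambda>x. C (f x)) + E (\<lambda>x. C (f x)) \<le> E f + E f"
    using E_sym[OF L] E_sym[OF f] by simp
  then show ?thesis by (rule ennreal_double_le)
qed

lemma E_lattice:
  assumes a: "L2 M a" and b: "L2 M b"
  shows "E (\<lambda>x. max (a x) (b x)) + E (\<lambda>x. min (a x) (b x)) \<le> E a + E b"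
proof -
  have Lf: "L2 M (\<lambda>x. (a x + b x) / 2)" using L2_divide[OF L2_add[OF a b]] .
  have Lg: "L2 M (\<lambda>x. (a x - b x) / 2)" using L2_divide[OF L2_diff[OF a b]] .
  have "E (\<lambda>x. (a x + b x) / 2 + \<bar>(a x - b x) / 2\<bar>) + E (\<lambda>x. (a x + b x) / 2 - \<bar>(a x - b x) / 2\<bar>)
     \<le> E (\<lambda>x. (a x + b x) / 2 + (a x - b x) / 2) + E (\<lambda>x. (a x + b x) / 2 - (a x - b x) / 2)"
    by (rule E_contr[OF Lf Lg, of abs]) (auto simp: abs_triangle_ineq3)
  moreover have "(\<lambda>x. (a x + b x) / 2 + \<bar>(a x - b x) / 2\<bar>) = (\<lambda>x. max (a x) (b x))"
    by (rule ext) (simp add: max_def abs_if field_simps)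
  moreover have "(\<lambda>x. (a x + b x) / 2 - \<bar>(a x - b x) / 2\<bar>) = (\<lambda>x. min (a x) (b x))"
    by (rule ext) (simp add: min_def abs_if field_simps)
  moreover have "(\<lambda>x. (a x + b x) / 2 + (a x - b x) / 2) = a"
    by (rule ext) (simp add: field_simps)
  moreover have "(\<lambda>x. (a x + b x) / 2 - (a x - b x) / 2) = b"
    by (rule ext) (simp add: field_simps)
  ultimately show ?thesis by simp
qed

lemma E_split:
  assumes h: "L2 M h" and c: "0 \<le> c"
  shows "E (\<lambda>x. min (h x) c) + E (\<lambda>x. max (h x - c) 0) \<le> E h"
proof -
  define C where "C = (\<lambda>y::real. if y \<le> c / 2 then y else c - y)"
  have Lf: "L2 M (\<lambda>x. h x / 2)" using L2_divide[OF h] .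
  have C0: "C 0 = 0" using c by (simp add: C_def)
  have CL: "\<bar>C s - C t\<bar> \<le> \<bar>s - t\<bar>" for s t
    by (simp add: C_def abs_if split: if_splits)
  have "E (\<lambda>x. h x / 2 + C (h x / 2)) + E (\<lambda>x. h x / 2 - C (h x / 2))
     \<le> E (\<lambda>x. h x / 2 + h x / 2) + E (\<lambda>x. h x / 2 - h x / 2)"
    by (rule E_contr[OF Lf Lf C0 CL])
  moreover have "(\<lambda>x. h x / 2 + C (h x / 2)) = (\<lambda>x. min (h x) c)"
    by (rule ext) (simp add: C_def min_def field_simps)
  moreover have "(\<lambda>x. h x / 2 - C (h x / 2)) = (\<lambda>x. max (h x - c) 0)"
    by (rule ext) (simp add: C_def max_def field_simps)
  moreover have "(\<lambda>x. h x / 2 + h x / 2) = h"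
    by (rule ext) (simp add: field_simps)
  ultimately show ?thesis by simp
qed

end

lemma ennreal_cancel_le:
  fixes A B :: ennreal
  assumes "A + ennreal x \<le> B + ennreal y" "B \<le> A" "A < \<infinity>" "0 \<le> y"
  shows "x \<le> y"
proof -
  have "A + ennreal x \<le> A + ennreal y" using assms(1,2) by (meson add_right_mono order_trans)
  then have "ennreal x \<le> ennreal y" using assms(3) by (auto simp: ennreal_add_left_cancel_le)
  then show ?thesis using assms(4) by (simp add: ennreal_le_iff)
qed

lemma sq_expand: fixes a x f :: real assumes "a \<noteq> 0"
  shows "a / 2 * (x - f / a)\<^sup>2 = a / 2 * x\<^sup>2 - x * f + f\<^sup>2 / (2 * a)"
  using assms by (simp add: power2_eq_square field_simps)

context ndf
begin

definition Fa :: "real \<Rightarrow> ('a \<Rightarrow> real) \<Rightarrow> ('a \<Rightarrow> real) \<Rightarrow> ennreal" where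
  "Fa \<alpha> f h = E h + ennreal (\<alpha> / 2 * integral\<^sup>L M (\<lambda>x. (h x - f x / \<alpha>)\<^sup>2))"

definition ismin :: "real \<Rightarrow> ('a \<Rightarrow> real) \<Rightarrow> ('a \<Rightarrow> real) \<Rightarrow> bool" where
  "ismin \<alpha> f h \<longleftrightarrow> L2 M h \<and> (\<forall>k. L2 M k \<longrightarrow> Fa \<alpha> f h \<le> Fa \<alpha> f k)"

lemma resolvent_eq: "resolvent M E \<alpha> f = (SOME h. ismin \<alpha> f h)"
  unfolding resolvent_def ismin_def Fa_def by simp

lemma Q_int: "L2 M h \<Longrightarrow> L2 M f \<Longrightarrow> integrable M (\<lambda>x. (h x - f x / \<alpha>)\<^sup>2)"
  using L2_sq_int[OF L2_diff[OF _ L2_divide]] by blast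

lemma Q_nonneg: fixes h f :: "'a \<Rightarrow> real" shows "0 \<le> integral\<^sup>L M (\<lambda>x. (h x - f x / \<alpha>)\<^sup>2)"
  by simp

lemma ismin_E_fin:
  assumes "ismin \<alpha> f h" "L2 M f"
  shows "E h < \<infinity>"
proof -
  have "Fa \<alpha> f h \<le> Fa \<alpha> f (\<lambda>x. 0)" using assms unfolding ismin_def by auto
  also have "\<dots> < \<infinity>" by (simp add: Fa_def)
  finally show ?thesis unfolding Fa_def by (simp add: top.not_eq_extremum)
qed

lemma ismin_L2: "ismin \<alpha> f h \<Longrightarrow> L2 M h" by (simp add: ismin_def)

lemma ismin_le: "ismin \<alpha> f h \<Longrightarrow> L2 M k \<Longrightarrow>
   E h + ennreal (\<alpha> / 2 * integral\<^sup>L M (\<lambda>x. (h x - f x / \<alpha>)\<^sup>2))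
   \<le> E k + ennreal (\<alpha> / 2 * integral\<^sup>L M (\<lambda>x. (k x - f x / \<alpha>)\<^sup>2))"
  unfolding ismin_def Fa_def by blast

lemma ismin_zero:
  assumes "ismin \<alpha> (\<lambda>x. 0) h" "0 < \<alpha>"
  shows "AE x in M. h x = 0"
proof -
  have L: "L2 M h" using assms by (simp add: ismin_def)
  have "E h + ennreal (\<alpha> / 2 * integral\<^sup>L M (\<lambda>x. (h x - 0 / \<alpha>)\<^sup>2))
     \<le> E (\<lambda>x. 0) + ennreal (\<alpha> / 2 * integral\<^sup>L M (\<lambda>x. (0 - 0 / \<alpha>)\<^sup>2))"
    using ismin_le[OF assms(1), of "\<lambda>x. 0"] by simp
  then have "ennreal (\<alpha> / 2 * integral\<^sup>L M (\<lambda>x. (h x)\<^sup>2)) \<le> 0" 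
    by (simp add: add_increasing)
  then have "\<alpha> / 2 * integral\<^sup>L M (\<lambda>x. (h x)\<^sup>2) \<le> 0" by (metis ennreal_eq_0_iff le_zero_eq)
  then have "integral\<^sup>L M (\<lambda>x. (h x)\<^sup>2) \<le> 0" using assms(2)
    by (simp add: mult_le_0_iff)
  then have "integral\<^sup>L M (\<lambda>x. (h x)\<^sup>2) = 0" by (simp add: order_antisym)
  then have "AE x in M. (h x)\<^sup>2 = 0"
    using integral_nonneg_eq_0_iff_AE[OF L2_sq_int[OF L]] by simp
  then show ?thesis by simp
qed

end

lemma pw_pos: fixes h v :: real assumes "0 \<le> v"
  shows "(min h 0)\<^sup>2 \<le> (h - v)\<^sup>2 - (max h 0 - v)\<^sup>2"
proof (cases "0 \<le> h")
  case True then show ?thesis by simp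
next
  case False
  then have "h * v \<le> 0" using assms by (simp add: mult_nonpos_nonneg)
  then show ?thesis using False by (simp add: power2_eq_square algebra_simps)
qed

lemma pw_key: fixes a h u f :: real assumes "0 < a"
  shows "f * max (u - h) 0 - a / 2 * u\<^sup>2 \<le> a / 2 * (h - f / a)\<^sup>2 - a / 2 * (max h u - f / a)\<^sup>2"
proof -
  have e: "a / 2 * (x - f / a)\<^sup>2 = a / 2 * x\<^sup>2 - x * f + f\<^sup>2 / (2 * a)" for x
    using sq_expand[of a x f] assms by simp
  have n1: "0 \<le> a * h\<^sup>2" "0 \<le> a * u\<^sup>2" using assms by simp_all
  show ?thesis
  proof (cases "u \<le> h")
    case True then show ?thesis using n1 by (simp add: max_def)
  next
    case False
    then have "max h u = u" "max (u - h) 0 = u - h" by auto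
    then show ?thesis unfolding e using n1 by (simp add: algebra_simps)
  qed
qed

lemma pw_trunc: fixes a h f c :: real assumes "0 < a" "0 \<le> h" "0 \<le> f" "0 \<le> c"
  shows "- (c * f) \<le> a / 2 * (h - f / a)\<^sup>2 - a / 2 * (max (h - c) 0 - f / a)\<^sup>2"
proof -
  have e: "a / 2 * (x - f / a)\<^sup>2 = a / 2 * x\<^sup>2 - x * f + f\<^sup>2 / (2 * a)" for x
    using sq_expand[of a x f] assms by simp
  show ?thesis
  proof (cases "h \<le> c")
    case True
    then have "h * f \<le> c * f" using assms by (simp add: mult_right_mono)
    moreover have "0 \<le> a * h\<^sup>2" using assms by simp
    ultimately show ?thesis using True unfolding e by (simp add: max_def)
  next
    case False
    then have w: "max (h - c) 0 = h - c" by auto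
    have p: "0 \<le> a * (c * (2 * h - c))" using assms False by simp
    have p2: "0 \<le> c * f" using assms by simp
    have "a / 2 * (h - f / a)\<^sup>2 - a / 2 * (max (h - c) 0 - f / a)\<^sup>2 = a * (c * (2 * h - c)) / 2 - c * f"
      unfolding e w by (simp add: power2_eq_square algebra_simps add_divide_distrib diff_divide_distrib)
    then show ?thesis using p p2 by simp
  qed
qed

lemma pw_mono: fixes a b x y f :: real assumes "0 < a" "0 < b"
  shows "a / 2 * (max x y - f / a)\<^sup>2 + b / 2 * (min x y - f / b)\<^sup>2
          - a / 2 * (x - f / a)\<^sup>2 - b / 2 * (y - f / b)\<^sup>2
        = (if x < y then (b - a) / 2 * (x\<^sup>2 - y\<^sup>2) else 0)"
proof -
  have e: "a / 2 * (z - f / a)\<^sup>2 = a / 2 * z\<^sup>2 - z * f + f\<^sup>2 / (2 * a)" for z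
    using sq_expand[of a z f] assms by simp
  have e2: "b / 2 * (z - f / b)\<^sup>2 = b / 2 * z\<^sup>2 - z * f + f\<^sup>2 / (2 * b)" for z
    using sq_expand[of b z f] assms by simp
  show ?thesis unfolding e e2
    by (cases "x < y") (simp_all add: max_def min_def algebra_simps, simp add: field_simps)
qed

context ndf
begin

lemma ismin_nonneg:
  assumes m: "ismin \<alpha> f h" and a: "0 < \<alpha>" and f: "L2 M f" and fpos: "\<And>x. x \<in> space M \<Longrightarrow> 0 \<le> f x"
  shows "AE x in M. 0 \<le> h x"
proof -
  have L: "L2 M h" using m by (rule ismin_L2)
  define h' where "h' = (\<lambda>x. max (h x) 0)"
  have L': "L2 M h'" unfolding h'_def using L2_max[OF L L2_zero] .
  have "E h' \<le> E h" unfolding h'_def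
  proof (rule E_contraction[OF L, of "\<lambda>y. max y 0"])
    show "\<bar>max s 0 - max t 0\<bar> \<le> \<bar>s - t\<bar>" for s t :: real by (simp add: max_def abs_if)
    show "(\<lambda>x. max (h x) 0) \<in> borel_measurable M" using L2_measurable[OF L] by measurable
  qed simp
  have le: "E h + ennreal (\<alpha> / 2 * integral\<^sup>L M (\<lambda>x. (h x - f x / \<alpha>)\<^sup>2))
     \<le> E h' + ennreal (\<alpha> / 2 * integral\<^sup>L M (\<lambda>x. (h' x - f x / \<alpha>)\<^sup>2))"
    by (rule ismin_le[OF m L'])
  have fin: "E h < \<infinity>" by (rule ismin_E_fin[OF m f])
  have "\<alpha> / 2 * integral\<^sup>L M (\<lambda>x. (h x - f x / \<alpha>)\<^sup>2) \<le> \<alpha> / 2 * integral\<^sup>L M (\<lambda>x. (h' x - f x / \<alpha>)\<^sup>2)"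
    by (rule ennreal_cancel_le[OF le \<open>E h' \<le> E h\<close> fin]) (use a Q_nonneg in simp)
  then have Qle: "integral\<^sup>L M (\<lambda>x. (h x - f x / \<alpha>)\<^sup>2) \<le> integral\<^sup>L M (\<lambda>x. (h' x - f x / \<alpha>)\<^sup>2)"
    using a by simp
  have "integral\<^sup>L M (\<lambda>x. (min (h x) 0)\<^sup>2) \<le> integral\<^sup>L M (\<lambda>x. (h x - f x / \<alpha>)\<^sup>2 - (h' x - f x / \<alpha>)\<^sup>2)"
  proof (rule integral_mono)
    show "integrable M (\<lambda>x. (min (h x) 0)\<^sup>2)" using L2_sq_int[OF L2_min[OF L L2_zero]] .
    show "integrable M (\<lambda>x. (h x - f x / \<alpha>)\<^sup>2 - (h' x - f x / \<alpha>)\<^sup>2)"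
      using Q_int[OF L f] Q_int[OF L' f] by auto
    fix x assume "x \<in> space M"
    then show "(min (h x) 0)\<^sup>2 \<le> (h x - f x / \<alpha>)\<^sup>2 - (h' x - f x / \<alpha>)\<^sup>2"
      unfolding h'_def using pw_pos[of "f x / \<alpha>" "h x"] fpos a by simp
  qed
  also have "\<dots> = integral\<^sup>L M (\<lambda>x. (h x - f x / \<alpha>)\<^sup>2) - integral\<^sup>L M (\<lambda>x. (h' x - f x / \<alpha>)\<^sup>2)"
    using Q_int[OF L f] Q_int[OF L' f] by (rule Bochner_Integration.integral_diff)
  also have "\<dots> \<le> 0" using Qle by simp
  finally have "integral\<^sup>L M (\<lambda>x. (min (h x) 0)\<^sup>2) = 0"
    by (simp add: order_antisym)
  then have "AE x in M. (min (h x) 0)\<^sup>2 = 0"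
    using integral_nonneg_eq_0_iff_AE[OF L2_sq_int[OF L2_min[OF L L2_zero]]] by simp
  then show ?thesis by (rule eventually_mono) (auto simp: min_def split: if_splits)
qed

lemma key_ineq:
  assumes m: "ismin \<alpha> f h" and a: "0 < \<alpha>" and f: "L2 M f" and u: "L2 M u"
  shows "ennreal (\<integral>x. f x * max (u x - h x) 0 \<partial>M) \<le> E u + ennreal (\<alpha> / 2 * (\<integral>x. (u x)\<^sup>2 \<partial>M))"
proof (cases "E u = \<infinity>")
  case True then show ?thesis by simp
next
  case False
  then obtain eu where eu: "E u = ennreal eu" "0 \<le> eu" by (cases "E u") auto
  have L: "L2 M h" using m by (rule ismin_L2)
  define hu where "hu = (\<lambda>x. max (h x) (u x))"
  have Lhu: "L2 M hu" unfolding hu_def using L2_max[OF L u] .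
  have Ehu: "E hu \<le> E h + E u"
    using E_lattice[OF L u] unfolding hu_def by (metis add_increasing2 le_iff_add order_trans zero_le)
  have fin: "E h < \<infinity>" by (rule ismin_E_fin[OF m f])
  have "E h + ennreal (\<alpha> / 2 * integral\<^sup>L M (\<lambda>x. (h x - f x / \<alpha>)\<^sup>2))
     \<le> E hu + ennreal (\<alpha> / 2 * integral\<^sup>L M (\<lambda>x. (hu x - f x / \<alpha>)\<^sup>2))"
    by (rule ismin_le[OF m Lhu])
  also have "\<dots> \<le> (E h + ennreal eu) + ennreal (\<alpha> / 2 * integral\<^sup>L M (\<lambda>x. (hu x - f x / \<alpha>)\<^sup>2))"
    using add_right_mono[OF Ehu] unfolding eu(1) .
  also have "\<dots> = E h + ennreal (eu + \<alpha> / 2 * integral\<^sup>L M (\<lambda>x. (hu x - f x / \<alpha>)\<^sup>2))"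
  proof -
    have X0: "0 \<le> \<alpha> / 2 * integral\<^sup>L M (\<lambda>x. (hu x - f x / \<alpha>)\<^sup>2)" using a Q_nonneg by simp
    show ?thesis by (simp only: ennreal_plus[OF eu(2) X0] add.assoc)
  qed
  finally have le: "\<alpha> / 2 * integral\<^sup>L M (\<lambda>x. (h x - f x / \<alpha>)\<^sup>2)
      \<le> eu + \<alpha> / 2 * integral\<^sup>L M (\<lambda>x. (hu x - f x / \<alpha>)\<^sup>2)"
    by (rule ennreal_cancel_le[OF _ order.refl fin]) (use a eu Q_nonneg in simp)
  have i1: "integrable M (\<lambda>x. f x * max (u x - h x) 0)"
    using L2_mult_int[OF f L2_max[OF L2_diff[OF u L] L2_zero]] .
  have i2: "integrable M (\<lambda>x. (u x)\<^sup>2)" using L2_sq_int[OF u] .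
  have "(\<integral>x. f x * max (u x - h x) 0 \<partial>M) - \<alpha> / 2 * (\<integral>x. (u x)\<^sup>2 \<partial>M)
      = (\<integral>x. f x * max (u x - h x) 0 - \<alpha> / 2 * (u x)\<^sup>2 \<partial>M)"
    using i1 i2 by simp
  also have "\<dots> \<le> (\<integral>x. \<alpha> / 2 * (h x - f x / \<alpha>)\<^sup>2 - \<alpha> / 2 * (hu x - f x / \<alpha>)\<^sup>2 \<partial>M)"
  proof (rule integral_mono)
    show "integrable M (\<lambda>x. f x * max (u x - h x) 0 - \<alpha> / 2 * (u x)\<^sup>2)" using i1 i2 by auto
    show "integrable M (\<lambda>x. \<alpha> / 2 * (h x - f x / \<alpha>)\<^sup>2 - \<alpha> / 2 * (hu x - f x / \<alpha>)\<^sup>2)"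
      using Q_int[OF L f] Q_int[OF Lhu f] by auto
    fix x show "f x * max (u x - h x) 0 - \<alpha> / 2 * (u x)\<^sup>2 \<le> \<alpha> / 2 * (h x - f x / \<alpha>)\<^sup>2 - \<alpha> / 2 * (hu x - f x / \<alpha>)\<^sup>2"
      unfolding hu_def by (rule pw_key[OF a])
  qed
  also have "\<dots> = \<alpha> / 2 * integral\<^sup>L M (\<lambda>x. (h x - f x / \<alpha>)\<^sup>2) - \<alpha> / 2 * integral\<^sup>L M (\<lambda>x. (hu x - f x / \<alpha>)\<^sup>2)"
    using Q_int[OF L f] Q_int[OF Lhu f] by simp
  finally have "(\<integral>x. f x * max (u x - h x) 0 \<partial>M) \<le> eu + \<alpha> / 2 * (\<integral>x. (u x)\<^sup>2 \<partial>M)"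
    using le by simp
  then have "ennreal (\<integral>x. f x * max (u x - h x) 0 \<partial>M) \<le> ennreal (eu + \<alpha> / 2 * (\<integral>x. (u x)\<^sup>2 \<partial>M))"
    by (rule ennreal_leI)
  also have "\<dots> = E u + ennreal (\<alpha> / 2 * (\<integral>x. (u x)\<^sup>2 \<partial>M))"
    using eu a by (simp add: ennreal_plus)
  finally show ?thesis .
qed

end

context ndf
begin

lemma trunc_bound:
  assumes m: "ismin \<alpha> f h" and a: "0 < \<alpha>" and f: "L2 M f" and fi: "integrable M f"
    and fpos: "\<And>x. x \<in> space M \<Longrightarrow> 0 \<le> f x" and c: "0 \<le> c"
  shows "E (\<lambda>x. min (h x) c) \<le> ennreal (c * integral\<^sup>L M f)"
proof -
  have L: "L2 M h" using m by (rule ismin_L2)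
  define w where "w = (\<lambda>x. max (h x - c) 0)"
  have Lw: "L2 M w" unfolding w_def
  proof (rule L2_bound[OF _ L])
    show "(\<lambda>x. max (h x - c) 0) \<in> borel_measurable M" using L2_measurable[OF L] by measurable
    show "\<bar>max (h x - c) 0\<bar> \<le> \<bar>h x\<bar>" for x using c by (simp add: max_def abs_if)
  qed
  have hpos: "AE x in M. 0 \<le> h x" by (rule ismin_nonneg[OF m a f fpos])
  have split: "E (\<lambda>x. min (h x) c) + E w \<le> E h" unfolding w_def by (rule E_split[OF L c])
  have le: "E h + ennreal (\<alpha> / 2 * integral\<^sup>L M (\<lambda>x. (h x - f x / \<alpha>)\<^sup>2))
     \<le> E w + ennreal (\<alpha> / 2 * integral\<^sup>L M (\<lambda>x. (w x - f x / \<alpha>)\<^sup>2))"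
    by (rule ismin_le[OF m Lw])
  have fin: "E h < \<infinity>" by (rule ismin_E_fin[OF m f])
  have "E w \<le> E (\<lambda>x. min (h x) c) + E w" by (rule add_increasing[OF zero_le order.refl])
  then have finw: "E w < \<infinity>" using split fin by (meson order_trans le_less_trans)
  define Qh where "Qh = \<alpha> / 2 * integral\<^sup>L M (\<lambda>x. (h x - f x / \<alpha>)\<^sup>2)"
  define Qw where "Qw = \<alpha> / 2 * integral\<^sup>L M (\<lambda>x. (w x - f x / \<alpha>)\<^sup>2)"
  have Qh0: "0 \<le> Qh" and Qw0: "0 \<le> Qw" unfolding Qh_def Qw_def using a Q_nonneg by simp_all
  have cf0: "0 \<le> c * integral\<^sup>L M f" using c fpos by simp
  have "- (c * integral\<^sup>L M f) = (\<integral>x. - (c * f x) \<partial>M)" by simp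
  also have "\<dots> \<le> (\<integral>x. \<alpha> / 2 * (h x - f x / \<alpha>)\<^sup>2 - \<alpha> / 2 * (w x - f x / \<alpha>)\<^sup>2 \<partial>M)"
  proof (rule integral_mono_AE)
    show "integrable M (\<lambda>x. - (c * f x))" using fi by simp
    show "integrable M (\<lambda>x. \<alpha> / 2 * (h x - f x / \<alpha>)\<^sup>2 - \<alpha> / 2 * (w x - f x / \<alpha>)\<^sup>2)"
      using Q_int[OF L f] Q_int[OF Lw f] by auto
    show "AE x in M. - (c * f x) \<le> \<alpha> / 2 * (h x - f x / \<alpha>)\<^sup>2 - \<alpha> / 2 * (w x - f x / \<alpha>)\<^sup>2"
      using hpos
    proof (rule AE_mp, intro AE_I2 impI)
      fix x assume "x \<in> space M" "0 \<le> h x"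
      then show "- (c * f x) \<le> \<alpha> / 2 * (h x - f x / \<alpha>)\<^sup>2 - \<alpha> / 2 * (w x - f x / \<alpha>)\<^sup>2"
        unfolding w_def using pw_trunc[OF a _ fpos c] by blast
    qed
  qed
  also have "\<dots> = Qh - Qw" unfolding Qh_def Qw_def
    using Q_int[OF L f] Q_int[OF Lw f] by simp
  finally have QQ: "Qw \<le> Qh + c * integral\<^sup>L M f" by simp
  have "E (\<lambda>x. min (h x) c) + (E w + ennreal Qh) = (E (\<lambda>x. min (h x) c) + E w) + ennreal Qh"
    by (simp add: add.assoc)
  also have "\<dots> \<le> E h + ennreal Qh" using split by (rule add_right_mono)
  also have "\<dots> \<le> E w + ennreal Qw" using le unfolding Qh_def Qw_def .
  also have "\<dots> \<le> E w + ennreal (Qh + c * integral\<^sup>L M f)"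
    using QQ by (intro add_left_mono ennreal_leI)
  also have "\<dots> = ennreal (c * integral\<^sup>L M f) + (E w + ennreal Qh)"
    unfolding ennreal_plus[OF Qh0 cf0] by (simp only: add_ac)
  finally have "E (\<lambda>x. min (h x) c) + (E w + ennreal Qh) \<le> ennreal (c * integral\<^sup>L M f) + (E w + ennreal Qh)" .
  then have "(E w + ennreal Qh) + E (\<lambda>x. min (h x) c) \<le> (E w + ennreal Qh) + ennreal (c * integral\<^sup>L M f)"
    by (simp only: add.commute)
  moreover have "E w + ennreal Qh \<noteq> \<infinity>" using finw by simp
  ultimately show ?thesis by (simp add: ennreal_add_left_cancel_le)
qed

lemma mono_alpha:
  assumes ma: "ismin \<alpha> f a" and mb: "ismin \<beta> f b" and al: "0 < \<alpha>" "\<alpha> < \<beta>"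
    and f: "L2 M f" and fpos: "\<And>x. x \<in> space M \<Longrightarrow> 0 \<le> f x"
  shows "AE x in M. b x \<le> a x"
proof -
  have be: "0 < \<beta>" using al by simp
  have La: "L2 M a" using ma by (rule ismin_L2)
  have Lb: "L2 M b" using mb by (rule ismin_L2)
  define mx where "mx = (\<lambda>x. max (a x) (b x))"
  define mn where "mn = (\<lambda>x. min (a x) (b x))"
  have Lmx: "L2 M mx" unfolding mx_def by (rule L2_max[OF La Lb])
  have Lmn: "L2 M mn" unfolding mn_def by (rule L2_min[OF La Lb])
  define A1 where "A1 = \<alpha> / 2 * integral\<^sup>L M (\<lambda>x. (a x - f x / \<alpha>)\<^sup>2)"
  define A2 where "A2 = \<alpha> / 2 * integral\<^sup>L M (\<lambda>x. (mx x - f x / \<alpha>)\<^sup>2)"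
  define B1 where "B1 = \<beta> / 2 * integral\<^sup>L M (\<lambda>x. (b x - f x / \<beta>)\<^sup>2)"
  define B2 where "B2 = \<beta> / 2 * integral\<^sup>L M (\<lambda>x. (mn x - f x / \<beta>)\<^sup>2)"
  have nn: "0 \<le> A1" "0 \<le> A2" "0 \<le> B1" "0 \<le> B2"
    unfolding A1_def A2_def B1_def B2_def using al be Q_nonneg by simp_all
  have le1: "E a + ennreal A1 \<le> E mx + ennreal A2" unfolding A1_def A2_def by (rule ismin_le[OF ma Lmx])
  have le2: "E b + ennreal B1 \<le> E mn + ennreal B2" unfolding B1_def B2_def by (rule ismin_le[OF mb Lmn])
  have lat: "E mx + E mn \<le> E a + E b" unfolding mx_def mn_def by (rule E_lattice[OF La Lb])
  have fin: "E a + E b < \<infinity>" using ismin_E_fin[OF ma f] ismin_E_fin[OF mb f] by simp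
  have "(E a + E b) + ennreal (A1 + B1) = (E a + ennreal A1) + (E b + ennreal B1)"
    unfolding ennreal_plus[OF nn(1) nn(3)] by (simp only: add_ac)
  also have "\<dots> \<le> (E mx + ennreal A2) + (E mn + ennreal B2)" using le1 le2 by (rule add_mono)
  also have "\<dots> = (E mx + E mn) + ennreal (A2 + B2)"
    unfolding ennreal_plus[OF nn(2) nn(4)] by (simp only: add_ac)
  also have "\<dots> \<le> (E a + E b) + ennreal (A2 + B2)" using lat by (rule add_right_mono)
  finally have "(E a + E b) + ennreal (A1 + B1) \<le> (E a + E b) + ennreal (A2 + B2)" .
  then have AB: "A1 + B1 \<le> A2 + B2"
    by (rule ennreal_cancel_le[OF _ order.refl fin]) (use nn in simp)
  define D where "D = (\<lambda>x. \<alpha> / 2 * (mx x - f x / \<alpha>)\<^sup>2 + \<beta> / 2 * (mn x - f x / \<beta>)\<^sup>2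
          - \<alpha> / 2 * (a x - f x / \<alpha>)\<^sup>2 - \<beta> / 2 * (b x - f x / \<beta>)\<^sup>2)"
  have Dint: "integrable M D" unfolding D_def
    using Q_int[OF La f] Q_int[OF Lb f] Q_int[OF Lmx f] Q_int[OF Lmn f] by auto
  have "integral\<^sup>L M D = A2 + B2 - A1 - B1" unfolding D_def A1_def A2_def B1_def B2_def
    using Q_int[OF La f] Q_int[OF Lb f] Q_int[OF Lmx f] Q_int[OF Lmn f] by simp
  then have D0: "0 \<le> integral\<^sup>L M D" using AB by simp
  have Dpw: "D x = (if a x < b x then (\<beta> - \<alpha>) / 2 * ((a x)\<^sup>2 - (b x)\<^sup>2) else 0)" for x
    unfolding D_def mx_def mn_def by (rule pw_mono[OF al(1) be])
  have apos: "AE x in M. 0 \<le> a x" by (rule ismin_nonneg[OF ma al(1) f fpos])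
  have Dneg: "AE x in M. 0 \<le> - D x"
    using apos
  proof (rule AE_mp, intro AE_I2 impI)
    fix x assume ax: "0 \<le> a x"
    show "0 \<le> - D x"
    proof (cases "a x < b x")
      case True
      then have "(a x)\<^sup>2 \<le> (b x)\<^sup>2" using ax by (intro power_mono) auto
      then have "(\<beta> - \<alpha>) / 2 * ((a x)\<^sup>2 - (b x)\<^sup>2) \<le> 0" using al by (intro mult_nonneg_nonpos) auto
      then show ?thesis unfolding Dpw using True by simp
    qed (simp add: Dpw)
  qed
  have m1: "integral\<^sup>L M (\<lambda>x. - D x) = - integral\<^sup>L M D" by (rule Bochner_Integration.integral_minus)
  have m2: "0 \<le> integral\<^sup>L M (\<lambda>x. - D x)" by (rule integral_nonneg_AE[OF Dneg])
  have "integral\<^sup>L M (\<lambda>x. - D x) = 0" using m1 m2 D0 by linarith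
  then have "AE x in M. - D x = 0"
    using integral_nonneg_eq_0_iff_AE[of M "\<lambda>x. - D x"] Dint Dneg by simp
  then show ?thesis using apos
  proof (rule AE_mp[OF _ AE_mp], intro AE_I2 impI)
    fix x assume "- D x = 0" "0 \<le> a x"
    show "b x \<le> a x"
    proof (rule ccontr)
      assume "\<not> b x \<le> a x"
      then have "a x < b x" by simp
      then have "(a x)\<^sup>2 < (b x)\<^sup>2" using \<open>0 \<le> a x\<close> by (simp add: power_strict_mono)
      then have "D x < 0" unfolding Dpw using \<open>a x < b x\<close> al
        by (simp add: mult_pos_neg)
      then show False using \<open>- D x = 0\<close> by simp
    qed
  qed
qed

end

lemma amgm_aux: fixes d w e :: real assumes "0 < e" "0 \<le> w"
  shows "\<bar>d\<bar> * w \<le> (d\<^sup>2 + e\<^sup>2 * w\<^sup>2) / (2 * e)"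
proof -
  have "0 \<le> (\<bar>d\<bar> - e * w)\<^sup>2" by simp
  then have "2 * e * (\<bar>d\<bar> * w) \<le> d\<^sup>2 + e\<^sup>2 * w\<^sup>2"
    by (simp add: power2_eq_square algebra_simps)
  then show ?thesis using assms by (simp add: field_simps)
qed

lemma sq_diff_bound: fixes a b :: real shows "a\<^sup>2 \<le> 2 * (a - b)\<^sup>2 + 2 * b\<^sup>2"
  using sq_bound_aux[of a "a - b" b] by simp

lemma L2_nn_integral: "L2 M f \<Longrightarrow> (\<integral>\<^sup>+x. ennreal ((f x)\<^sup>2) \<partial>M) = ennreal (\<integral>x. (f x)\<^sup>2 \<partial>M)"
  by (rule nn_integral_eq_integral) (auto simp: L2_def)

lemma L2_complete:
  assumes sf: "sigma_finite_measure M"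
    and k: "\<And>n. L2 M (k n)"
    and C: "\<And>e. 0 < e \<Longrightarrow> \<exists>N. \<forall>i\<ge>N. \<forall>j\<ge>N. (\<integral>x. (k i x - k j x)\<^sup>2 \<partial>M) < e"
  shows "\<exists>h r. L2 M h \<and> strict_mono r \<and> (AE x in M. (\<lambda>n. k (r n) x) \<longlonglongrightarrow> h x)
            \<and> (\<lambda>n. \<integral>x. (k n x - h x)\<^sup>2 \<partial>M) \<longlonglongrightarrow> 0"
proof -
  obtain g :: "'a \<Rightarrow> real" where g: "g \<in> borel_measurable M" "\<And>x. g x > 0" "\<And>x. g x \<le> 1" "integrable M g"
    using sigma_finite_measure.obtain_positive_integrable_function[OF sf] by metis
  have km[measurable]: "k n \<in> borel_measurable M" for n using k by (simp add: L2_def)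
  define w where "w = (\<lambda>x. sqrt (g x))"
  have wpos: "w x > 0" for x unfolding w_def using g(2) by simp
  have w2: "(w x)\<^sup>2 = g x" for x unfolding w_def using g(2) by (simp add: less_imp_le)
  have Lw: "L2 M w" unfolding L2_def using g(1,4) w2 unfolding w_def by simp
  define s where "s = (\<lambda>n x. k n x * w x)"
  have si: "integrable M (s n)" for n unfolding s_def by (rule L2_mult_int[OF k Lw])
  define G where "G = (\<integral>x. g x \<partial>M)"
  have G0: "0 \<le> G" unfolding G_def using g(2) by (simp add: less_imp_le)
  have Cs: "\<exists>N. \<forall>i\<ge>N. \<forall>j\<ge>N. (LINT x|M. norm (s i x - s j x)) < e" if e: "0 < e" for e
  proof -
    define \<eta> where "\<eta> = e / (G + 1)"
    have eta: "0 < \<eta>" unfolding \<eta>_def using e G0 by simp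
    obtain N where N: "\<And>i j. i \<ge> N \<Longrightarrow> j \<ge> N \<Longrightarrow> (\<integral>x. (k i x - k j x)\<^sup>2 \<partial>M) < \<eta> * e"
      using C[of "\<eta> * e"] eta e by auto
    show ?thesis
    proof (intro exI allI impI)
      fix i j assume ij: "N \<le> i" "N \<le> j"
      have "(LINT x|M. norm (s i x - s j x)) \<le> (LINT x|M. ((k i x - k j x)\<^sup>2 + \<eta>\<^sup>2 * g x) / (2 * \<eta>))"
      proof (rule integral_mono)
        show "integrable M (\<lambda>x. norm (s i x - s j x))" using si by auto
        show "integrable M (\<lambda>x. ((k i x - k j x)\<^sup>2 + \<eta>\<^sup>2 * g x) / (2 * \<eta>))"
          using L2_sq_int[OF L2_diff[OF k k]] g(4) by auto
        fix x
        have "norm (s i x - s j x) = \<bar>k i x - k j x\<bar> * w x"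
          unfolding s_def using wpos[of x] by (simp add: left_diff_distrib[symmetric] abs_mult)
        also have "\<dots> \<le> ((k i x - k j x)\<^sup>2 + \<eta>\<^sup>2 * (w x)\<^sup>2) / (2 * \<eta>)"
          using amgm_aux[OF eta, of "w x"] wpos[of x] by simp
        finally show "norm (s i x - s j x) \<le> ((k i x - k j x)\<^sup>2 + \<eta>\<^sup>2 * g x) / (2 * \<eta>)"
          by (simp add: w2)
      qed
      also have "\<dots> = ((\<integral>x. (k i x - k j x)\<^sup>2 \<partial>M) + \<eta>\<^sup>2 * G) / (2 * \<eta>)"
        unfolding G_def using L2_sq_int[OF L2_diff[OF k k]] g(4) by simp
      also have "\<dots> < (\<eta> * e + \<eta> * e) / (2 * \<eta>)"
      proof -
        have "\<eta>\<^sup>2 * G < \<eta> * e"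
        proof -
          have "\<eta> * G < e" unfolding \<eta>_def using e G0 by (simp add: field_simps)
          then show ?thesis using eta by (simp add: power2_eq_square)
        qed
        then have "(\<integral>x. (k i x - k j x)\<^sup>2 \<partial>M) + \<eta>\<^sup>2 * G < \<eta> * e + \<eta> * e" using N[OF ij] by linarith
        then show ?thesis using eta by (intro divide_strict_right_mono) auto
      qed
      also have "\<dots> = e" using eta by simp
      finally show "(LINT x|M. norm (s i x - s j x)) < e" .
    qed
  qed
  obtain r where r: "strict_mono r" "AE x in M. Cauchy (\<lambda>i. s (r i) x)"
    by (rule cauchy_L1_AE_cauchy_subseq[OF si Cs])
  define h where "h = (\<lambda>x. lim (\<lambda>i. k (r i) x))"
  have hm[measurable]: "h \<in> borel_measurable M" unfolding h_def
    by (rule borel_measurable_lim_metric) (use k in \<open>simp add: L2_def\<close>)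
  have conv: "AE x in M. (\<lambda>i. k (r i) x) \<longlonglongrightarrow> h x"
    using r(2)
  proof (rule AE_mp, intro AE_I2 impI)
    fix x assume "Cauchy (\<lambda>i. s (r i) x)"
    then have "convergent (\<lambda>i. k (r i) x * w x)" unfolding s_def by (simp add: Cauchy_convergent_iff)
    then obtain l where "(\<lambda>i. k (r i) x * w x) \<longlonglongrightarrow> l" by (auto simp: convergent_def)
    then have "(\<lambda>i. k (r i) x * w x * (1 / w x)) \<longlonglongrightarrow> l * (1 / w x)" by (intro tendsto_intros)
    then have "(\<lambda>i. k (r i) x) \<longlonglongrightarrow> l / w x" using wpos[of x] by simp
    then show "(\<lambda>i. k (r i) x) \<longlonglongrightarrow> h x" unfolding h_def by (simp add: limI)
  qed
  have fatou: "(\<integral>\<^sup>+x. ennreal ((k j x - h x)\<^sup>2) \<partial>M) \<le> liminf (\<lambda>i. \<integral>\<^sup>+x. ennreal ((k j x - k (r i) x)\<^sup>2) \<partial>M)" for j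
  proof -
    have "(\<integral>\<^sup>+x. ennreal ((k j x - h x)\<^sup>2) \<partial>M) = (\<integral>\<^sup>+x. liminf (\<lambda>i. ennreal ((k j x - k (r i) x)\<^sup>2)) \<partial>M)"
    proof (rule nn_integral_cong_AE)
      show "AE x in M. ennreal ((k j x - h x)\<^sup>2) = liminf (\<lambda>i. ennreal ((k j x - k (r i) x)\<^sup>2))"
        using conv
      proof (rule AE_mp, intro AE_I2 impI)
        fix x assume "(\<lambda>i. k (r i) x) \<longlonglongrightarrow> h x"
        then have t: "(\<lambda>i. ennreal ((k j x - k (r i) x)\<^sup>2)) \<longlonglongrightarrow> ennreal ((k j x - h x)\<^sup>2)"
          by (intro tendsto_ennrealI tendsto_intros)
        show "ennreal ((k j x - h x)\<^sup>2) = liminf (\<lambda>i. ennreal ((k j x - k (r i) x)\<^sup>2))"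
          using lim_imp_Liminf[OF sequentially_bot t] by (rule sym)
      qed
    qed
    also have "\<dots> \<le> liminf (\<lambda>i. \<integral>\<^sup>+x. ennreal ((k j x - k (r i) x)\<^sup>2) \<partial>M)"
      by (rule nn_integral_liminf) measurable
    finally show ?thesis .
  qed
  have small: "\<exists>N. \<forall>j\<ge>N. (\<integral>\<^sup>+x. ennreal ((k j x - h x)\<^sup>2) \<partial>M) \<le> ennreal e" if e: "0 < e" for e
  proof -
    obtain N where N: "\<And>i j. i \<ge> N \<Longrightarrow> j \<ge> N \<Longrightarrow> (\<integral>x. (k i x - k j x)\<^sup>2 \<partial>M) < e"
      using C[OF e] by auto
    show ?thesis
    proof (intro exI allI impI)
      fix j assume j: "N \<le> j"
      have ev: "eventually (\<lambda>i. (\<integral>\<^sup>+x. ennreal ((k j x - k (r i) x)\<^sup>2) \<partial>M) \<le> ennreal e) sequentially"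
        using eventually_ge_at_top[of N]
      proof eventually_elim
        case (elim i)
        then have "N \<le> r i" using r(1) seq_suble[OF r(1), of i] by linarith
        then have "(\<integral>x. (k j x - k (r i) x)\<^sup>2 \<partial>M) < e" using N j by blast
        then show ?case using L2_nn_integral[OF L2_diff[OF k k], of j "r i"] by (simp add: ennreal_leI)
      qed
      have "liminf (\<lambda>i. \<integral>\<^sup>+x. ennreal ((k j x - k (r i) x)\<^sup>2) \<partial>M)
          \<le> limsup (\<lambda>i. \<integral>\<^sup>+x. ennreal ((k j x - k (r i) x)\<^sup>2) \<partial>M)"
        by (rule Liminf_le_Limsup) simp
      also have "\<dots> \<le> ennreal e" using ev by (rule Limsup_bounded)
      finally show "(\<integral>\<^sup>+x. ennreal ((k j x - h x)\<^sup>2) \<partial>M) \<le> ennreal e" using fatou[of j] by simp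
    qed
  qed
  obtain N1 where N1: "\<And>j. j \<ge> N1 \<Longrightarrow> (\<integral>\<^sup>+x. ennreal ((k j x - h x)\<^sup>2) \<partial>M) \<le> ennreal 1"
    using small[of 1] by auto
  have Lh: "L2 M h"
  proof -
    have "(\<integral>\<^sup>+x. norm ((h x)\<^sup>2) \<partial>M) \<le> (\<integral>\<^sup>+x. 2 * ennreal ((k N1 x - h x)\<^sup>2) + 2 * ennreal ((k N1 x)\<^sup>2) \<partial>M)"
    proof (rule nn_integral_mono)
      fix x
      have "(h x)\<^sup>2 \<le> 2 * (h x - k N1 x)\<^sup>2 + 2 * (k N1 x)\<^sup>2" by (rule sq_diff_bound)
      also have "(h x - k N1 x)\<^sup>2 = (k N1 x - h x)\<^sup>2" by (simp add: power2_commute)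
      finally have "ennreal (norm ((h x)\<^sup>2)) \<le> ennreal (2 * (k N1 x - h x)\<^sup>2 + 2 * (k N1 x)\<^sup>2)"
        by (intro ennreal_leI) simp
      also have "\<dots> = 2 * ennreal ((k N1 x - h x)\<^sup>2) + 2 * ennreal ((k N1 x)\<^sup>2)"
        by (simp add: ennreal_plus ennreal_mult)
      finally show "ennreal (norm ((h x)\<^sup>2)) \<le> 2 * ennreal ((k N1 x - h x)\<^sup>2) + 2 * ennreal ((k N1 x)\<^sup>2)" .
    qed
    also have "\<dots> = 2 * (\<integral>\<^sup>+x. ennreal ((k N1 x - h x)\<^sup>2) \<partial>M) + 2 * (\<integral>\<^sup>+x. ennreal ((k N1 x)\<^sup>2) \<partial>M)"
      using hm k[of N1] by (simp add: nn_integral_add nn_integral_cmult L2_def)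
    also have "\<dots> < \<infinity>"
    proof -
      have A: "(\<integral>\<^sup>+x. ennreal ((k N1 x - h x)\<^sup>2) \<partial>M) < \<infinity>"
      proof -
        have "(\<integral>\<^sup>+x. ennreal ((k N1 x - h x)\<^sup>2) \<partial>M) \<le> ennreal 1" using N1[of N1] by simp
        also have "\<dots> < \<infinity>" by simp
        finally show ?thesis .
      qed
      have B: "(\<integral>\<^sup>+x. ennreal ((k N1 x)\<^sup>2) \<partial>M) < \<infinity>"
        using L2_nn_integral[OF k[of N1]] by simp
      show ?thesis using A B by (simp add: ennreal_mult_less_top)
    qed
    finally have "(\<integral>\<^sup>+x. norm ((h x)\<^sup>2) \<partial>M) < \<infinity>" .
    then have "integrable M (\<lambda>x. (h x)\<^sup>2)" using hm by (intro integrableI_bounded) auto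
    then show ?thesis using hm by (simp add: L2_def)
  qed
  have lim: "(\<lambda>n. \<integral>x. (k n x - h x)\<^sup>2 \<partial>M) \<longlonglongrightarrow> 0"
  proof (rule LIMSEQ_I)
    fix e :: real assume e: "0 < e"
    obtain N where N: "\<And>j. j \<ge> N \<Longrightarrow> (\<integral>\<^sup>+x. ennreal ((k j x - h x)\<^sup>2) \<partial>M) \<le> ennreal (e / 2)"
      using small[of "e / 2"] e by auto
    show "\<exists>N. \<forall>n\<ge>N. norm ((\<integral>x. (k n x - h x)\<^sup>2 \<partial>M) - 0) < e"
    proof (intro exI allI impI)
      fix n assume "N \<le> n"
      have eq: "ennreal (\<integral>x. (k n x - h x)\<^sup>2 \<partial>M) = (\<integral>\<^sup>+x. ennreal ((k n x - h x)\<^sup>2) \<partial>M)"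
        using L2_nn_integral[OF L2_diff[OF k Lh], of n] by (rule sym)
      have "ennreal (\<integral>x. (k n x - h x)\<^sup>2 \<partial>M) \<le> ennreal (e / 2)"
        unfolding eq using N[OF \<open>N \<le> n\<close>] .
      then have "(\<integral>x. (k n x - h x)\<^sup>2 \<partial>M) \<le> e / 2" using e by (simp add: ennreal_le_iff)
      moreover have "0 \<le> (\<integral>x. (k n x - h x)\<^sup>2 \<partial>M)" by simp
      ultimately show "norm ((\<integral>x. (k n x - h x)\<^sup>2 \<partial>M) - 0) < e" using e by simp
    qed
  qed
  show ?thesis using Lh r(1) conv lim by blast
qed


lemma liminf_add_ennreal:
  fixes f g :: "nat \<Rightarrow> ennreal"
  shows "liminf f + liminf g \<le> liminf (\<lambda>n. f n + g n)"
proof -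
  define A where "A = (\<lambda>n. INF m\<in>{n..}. f m)"
  define B where "B = (\<lambda>n. INF m\<in>{n..}. g m)"
  have iA: "incseq A" unfolding A_def by (intro incseq_SucI INF_superset_mono) auto
  have iB: "incseq B" unfolding B_def by (intro incseq_SucI INF_superset_mono) auto
  have "liminf f + liminf g = (SUP n. A n) + (SUP n. B n)"
    unfolding liminf_SUP_INF A_def B_def ..
  also have "\<dots> = (SUP n. A n + B n)" using ennreal_SUP_add[OF iA iB] by simp
  also have "\<dots> \<le> (SUP n. INF m\<in>{n..}. f m + g m)"
  proof (rule SUP_mono)
    fix n show "\<exists>n'\<in>UNIV. A n + B n \<le> (INF m\<in>{n'..}. f m + g m)"
    proof (intro bexI[of _ n] le_INF_iff[THEN iffD2] ballI)
      fix m assume "m \<in> {n..}"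
      then show "A n + B n \<le> f m + g m" unfolding A_def B_def
        by (intro add_mono INF_lower) auto
    qed simp
  qed
  also have "\<dots> = liminf (\<lambda>n. f n + g n)" unfolding liminf_SUP_INF ..
  finally show ?thesis .
qed

lemma lin_aux: fixes m p q X :: real assumes "m < (m + p + (m + q)) / 2 - X" shows "X < (p + q) / 2"
  using assms by (simp add: field_simps)

lemma mult_aux: fixes a p q :: real shows "8 / a * ((p + q) / 2) = 4 / a * (p + q)"
  by (cases "a = 0") (simp_all add: field_simps)

lemma aux2: fixes a e n :: real assumes "0 < a" "0 < e" "8 < n * (a * e)" "0 < n"
  shows "4 / a * (2 / n) < e"
proof -
  have "4 / a * (2 / n) = 8 / (n * a)" by simp
  also have "\<dots> < e" using assms by (simp add: pos_divide_less_eq mult.commute mult.left_commute)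
  finally show ?thesis .
qed

lemma mid_sq: fixes a b v :: real
  shows "(1 / 2 * a + (1 - 1 / 2) * b - v)\<^sup>2 = ((a - v)\<^sup>2 + (b - v)\<^sup>2) / 2 - (a - b)\<^sup>2 / 4"
  by (simp add: power2_eq_square field_simps)

context ndf
begin

lemma exists_min:
  assumes a: "0 < \<alpha>" and f: "L2 M f"
  shows "\<exists>h. ismin \<alpha> f h"
proof -
  define Q where "Q = (\<lambda>g. integral\<^sup>L M (\<lambda>x. (g x - f x / \<alpha>)\<^sup>2))"
  have FaQ: "Fa \<alpha> f g = E g + ennreal (\<alpha> / 2 * Q g)" for g unfolding Fa_def Q_def ..
  have Q0: "0 \<le> Q g" for g unfolding Q_def by (rule Q_nonneg)
  define m where "m = (INF k\<in>{k. L2 M k}. Fa \<alpha> f k)"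
  have m_le: "L2 M k \<Longrightarrow> m \<le> Fa \<alpha> f k" for k unfolding m_def by (rule INF_lower) simp
  have "m \<le> Fa \<alpha> f (\<lambda>x. 0)" by (rule m_le) simp
  also have "\<dots> < \<infinity>" unfolding FaQ by simp
  finally have mfin: "m < \<infinity>" .
  then obtain mr where mr: "m = ennreal mr" "0 \<le> mr" by (cases m rule: ennreal_cases) auto
  have low: "mr \<le> enn2real (E g) + \<alpha> / 2 * Q g" if g: "L2 M g" "E g < \<infinity>" for g
  proof -
    have "ennreal mr \<le> E g + ennreal (\<alpha> / 2 * Q g)" using m_le[OF g(1)] mr FaQ by simp
    also have "\<dots> = ennreal (enn2real (E g) + \<alpha> / 2 * Q g)"
      using g(2) a Q0[of g] by (simp add: ennreal_plus ennreal_enn2real_if less_top)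
    finally have le: "ennreal mr \<le> ennreal (enn2real (E g) + \<alpha> / 2 * Q g)" .
    have nn: "0 \<le> enn2real (E g) + \<alpha> / 2 * Q g" using a Q0[of g] by simp
    show ?thesis using le unfolding ennreal_le_iff[OF nn] .
  qed
  have "\<forall>n. \<exists>k. L2 M k \<and> Fa \<alpha> f k < ennreal (mr + 1 / Suc n)"
  proof
    fix n :: nat
    have "m < ennreal (mr + 1 / Suc n)" using mr by (simp add: ennreal_lessI)
    then show "\<exists>k. L2 M k \<and> Fa \<alpha> f k < ennreal (mr + 1 / Suc n)"
      unfolding m_def by (simp add: INF_less_iff)
  qed
  then obtain k where k: "\<And>n. L2 M (k n)" and kF: "\<And>n. Fa \<alpha> f (k n) < ennreal (mr + 1 / Suc n)"
    using choice[of "\<lambda>n k. L2 M k \<and> Fa \<alpha> f k < ennreal (mr + 1 / Suc n)"] by blast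
  have kfin: "E (k n) < \<infinity>" for n
  proof -
    have "E (k n) \<le> Fa \<alpha> f (k n)" unfolding FaQ by simp
    also have "\<dots> < \<infinity>" using kF[of n] by (simp add: less_top) (metis ennreal_less_top order.strict_trans)
    finally show ?thesis .
  qed
  define Fr where "Fr = (\<lambda>n. enn2real (E (k n)) + \<alpha> / 2 * Q (k n))"
  have FaFr: "Fa \<alpha> f (k n) = ennreal (Fr n)" for n
    unfolding FaQ Fr_def using kfin[of n] a Q0[of "k n"]
    by (simp add: ennreal_plus ennreal_enn2real_if less_top)
  have Fr_low: "mr \<le> Fr n" for n unfolding Fr_def by (rule low[OF k kfin])
  have Fr_up: "Fr n < mr + 1 / Suc n" for n
  proof -
    have "ennreal (Fr n) < ennreal (mr + 1 / Suc n)" using kF[of n] FaFr[of n] by simp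
    moreover have "0 \<le> Fr n" using Fr_low[of n] mr(2) by simp
    ultimately show ?thesis by (simp add: ennreal_less_iff)
  qed
  have Dbound: "(\<integral>x. (k i x - k j x)\<^sup>2 \<partial>M) < 4 / \<alpha> * (1 / Suc i + 1 / Suc j)" for i j
  proof -
    define mid where "mid = (\<lambda>x. 1 / 2 * k i x + (1 - 1 / 2) * k j x)"
    have Lmid: "L2 M mid" unfolding mid_def by (intro L2_add L2_cmult k)
    have Emid: "E mid \<le> ennreal (1 / 2) * E (k i) + ennreal (1 - 1 / 2) * E (k j)"
      unfolding mid_def by (rule E_convex[OF k k]) auto
    define ei where "ei = enn2real (E (k i))"
    define ej where "ej = enn2real (E (k j))"
    have ei: "E (k i) = ennreal ei" "0 \<le> ei" unfolding ei_def using kfin[of i] by simp_all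
    have ej: "E (k j) = ennreal ej" "0 \<le> ej" unfolding ej_def using kfin[of j] by simp_all
    have m1: "ennreal (1/2 * ei) = ennreal (1/2) * ennreal ei" by (rule ennreal_mult) (use ei(2) in auto)
    have m2: "ennreal ((1 - 1/2) * ej) = ennreal (1 - 1/2) * ennreal ej" by (rule ennreal_mult) (use ej(2) in auto)
    have p: "ennreal (1/2 * ei + (1 - 1/2) * ej) = ennreal (1/2 * ei) + ennreal ((1 - 1/2) * ej)"
      by (rule ennreal_plus) (use ei(2) ej(2) in auto)
    have e3: "1/2 * ei + (1 - 1/2) * ej = (ei + ej) / 2" by simp
    have "ennreal (1 / 2) * E (k i) + ennreal (1 - 1 / 2) * E (k j) = ennreal ((ei + ej) / 2)"
      unfolding ei(1) ej(1) m1[symmetric] m2[symmetric] p[symmetric] e3 ..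
    with Emid have Emid2: "E mid \<le> ennreal ((ei + ej) / 2)" by simp
    have Emid_fin: "E mid < \<infinity>" using Emid2 by (rule le_less_trans) simp
    have Emid_r: "enn2real (E mid) \<le> (enn2real (E (k i)) + enn2real (E (k j))) / 2"
      unfolding ei_def[symmetric] ej_def[symmetric] using ei(2) ej(2) Emid2 by (intro enn2real_leI) auto
    have Qmid: "Q mid = (Q (k i) + Q (k j)) / 2 - (\<integral>x. (k i x - k j x)\<^sup>2 \<partial>M) / 4"
    proof -
      have "Q mid = (\<integral>x. ((k i x - f x / \<alpha>)\<^sup>2 + (k j x - f x / \<alpha>)\<^sup>2) / 2 - (k i x - k j x)\<^sup>2 / 4 \<partial>M)"
        unfolding Q_def mid_def mid_sq ..
      also have "\<dots> = (Q (k i) + Q (k j)) / 2 - (\<integral>x. (k i x - k j x)\<^sup>2 \<partial>M) / 4"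
        unfolding Q_def using Q_int[OF k f, of i \<alpha>] Q_int[OF k f, of j \<alpha>] L2_sq_int[OF L2_diff[OF k k], of i j]
        by simp
      finally show ?thesis .
    qed
    have "mr \<le> enn2real (E mid) + \<alpha> / 2 * Q mid" by (rule low[OF Lmid Emid_fin])
    also have "\<dots> \<le> (Fr i + Fr j) / 2 - \<alpha> / 8 * (\<integral>x. (k i x - k j x)\<^sup>2 \<partial>M)"
      unfolding Qmid Fr_def using Emid_r by (simp add: field_simps)
    also have "\<dots> < (mr + 1 / Suc i + (mr + 1 / Suc j)) / 2 - \<alpha> / 8 * (\<integral>x. (k i x - k j x)\<^sup>2 \<partial>M)"
      using Fr_up[of i] Fr_up[of j] by simp
    finally have X: "\<alpha> / 8 * (\<integral>x. (k i x - k j x)\<^sup>2 \<partial>M) < (1 / Suc i + 1 / Suc j) / 2"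
      by (rule lin_aux)
    have "(\<integral>x. (k i x - k j x)\<^sup>2 \<partial>M) = 8 / \<alpha> * (\<alpha> / 8 * (\<integral>x. (k i x - k j x)\<^sup>2 \<partial>M))"
      using a by simp
    also have "\<dots> < 8 / \<alpha> * ((1 / Suc i + 1 / Suc j) / 2)"
      using X a by (intro mult_strict_left_mono) auto
    also have "\<dots> = 4 / \<alpha> * (1 / Suc i + 1 / Suc j)" by (rule mult_aux)
    finally show ?thesis .
  qed
  have Cauchy: "\<exists>N. \<forall>i\<ge>N. \<forall>j\<ge>N. (\<integral>x. (k i x - k j x)\<^sup>2 \<partial>M) < e" if e: "0 < e" for e
  proof -
    obtain N :: nat where N: "8 / (\<alpha> * e) < real N" using reals_Archimedean2 by blast
    show ?thesis
    proof (intro exI allI impI)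
      fix i j assume ij: "N \<le> i" "N \<le> j"
      have "1 / real (Suc i) \<le> 1 / real (Suc N)" "1 / real (Suc j) \<le> 1 / real (Suc N)"
        using ij by (simp_all add: frac_le)
      then have "4 / \<alpha> * (1 / Suc i + 1 / Suc j) \<le> 4 / \<alpha> * (2 / Suc N)"
        using a by (intro mult_left_mono) auto
      also have "\<dots> < e"
      proof -
        have "8 / (\<alpha> * e) < real (Suc N)" using N by simp
        then have "8 < real (Suc N) * (\<alpha> * e)" using a e by (simp add: field_simps)
        then show ?thesis by (rule aux2[OF a e]) simp
      qed
      finally show "(\<integral>x. (k i x - k j x)\<^sup>2 \<partial>M) < e" using Dbound[of i j] by simp
    qed
  qed
  obtain h r where Lh: "L2 M h" and r: "strict_mono r"
    and conv: "AE x in M. (\<lambda>n. k (r n) x) \<longlonglongrightarrow> h x"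
    and lim: "(\<lambda>n. \<integral>x. (k n x - h x)\<^sup>2 \<partial>M) \<longlonglongrightarrow> 0"
    using L2_complete[OF sigma_finite_measure_axioms k Cauchy] by blast
  have lsc: "E h \<le> liminf (\<lambda>n. E (k (r n)))"
  proof (rule E_lsc)
    show "(\<lambda>n. \<integral>x. (k (r n) x - h x)\<^sup>2 \<partial>M) \<longlonglongrightarrow> 0"
      using LIMSEQ_subseq_LIMSEQ[OF lim r] by (simp add: o_def)
  qed (use k Lh in auto)
  have km[measurable]: "k n \<in> borel_measurable M" for n using k by (simp add: L2_def)
  have fm[measurable]: "f \<in> borel_measurable M" using f by (simp add: L2_def)
  have QQ: "ennreal (\<alpha> / 2 * Q g) = (\<integral>\<^sup>+x. ennreal (\<alpha> / 2 * (g x - f x / \<alpha>)\<^sup>2) \<partial>M)" if g: "L2 M g" for g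
  proof -
    have "\<alpha> / 2 * Q g = (\<integral>x. \<alpha> / 2 * (g x - f x / \<alpha>)\<^sup>2 \<partial>M)" unfolding Q_def by simp
    also have "ennreal \<dots> = (\<integral>\<^sup>+x. ennreal (\<alpha> / 2 * (g x - f x / \<alpha>)\<^sup>2) \<partial>M)"
      by (rule nn_integral_eq_integral[symmetric]) (use Q_int[OF g f, of \<alpha>] a in auto)
    finally show ?thesis .
  qed
  have fatou: "ennreal (\<alpha> / 2 * Q h) \<le> liminf (\<lambda>n. ennreal (\<alpha> / 2 * Q (k (r n))))"
  proof -
    have "ennreal (\<alpha> / 2 * Q h) = (\<integral>\<^sup>+x. liminf (\<lambda>n. ennreal (\<alpha> / 2 * (k (r n) x - f x / \<alpha>)\<^sup>2)) \<partial>M)"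
      unfolding QQ[OF Lh]
    proof (rule nn_integral_cong_AE)
      show "AE x in M. ennreal (\<alpha> / 2 * (h x - f x / \<alpha>)\<^sup>2) = liminf (\<lambda>n. ennreal (\<alpha> / 2 * (k (r n) x - f x / \<alpha>)\<^sup>2))"
        using conv
      proof (rule AE_mp, intro AE_I2 impI)
        fix x assume "(\<lambda>n. k (r n) x) \<longlonglongrightarrow> h x"
        then have t: "(\<lambda>n. ennreal (\<alpha> / 2 * (k (r n) x - f x / \<alpha>)\<^sup>2)) \<longlonglongrightarrow> ennreal (\<alpha> / 2 * (h x - f x / \<alpha>)\<^sup>2)"
          by (intro tendsto_ennrealI tendsto_intros)
        show "ennreal (\<alpha> / 2 * (h x - f x / \<alpha>)\<^sup>2) = liminf (\<lambda>n. ennreal (\<alpha> / 2 * (k (r n) x - f x / \<alpha>)\<^sup>2))"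
          using lim_imp_Liminf[OF sequentially_bot t] by (rule sym)
      qed
    qed
    also have "\<dots> \<le> liminf (\<lambda>n. \<integral>\<^sup>+x. ennreal (\<alpha> / 2 * (k (r n) x - f x / \<alpha>)\<^sup>2) \<partial>M)"
      by (rule nn_integral_liminf) measurable
    also have "\<dots> = liminf (\<lambda>n. ennreal (\<alpha> / 2 * Q (k (r n))))"
      using QQ[OF k] by simp
    finally show ?thesis .
  qed
  have Frlim: "Fr \<longlonglongrightarrow> mr"
  proof (rule tendsto_sandwich[of "\<lambda>n. mr" _ _ "\<lambda>n. mr + 1 / Suc n"])
    show "\<forall>\<^sub>F n in sequentially. mr \<le> Fr n" using Fr_low by simp
    show "\<forall>\<^sub>F n in sequentially. Fr n \<le> mr + 1 / Suc n" using Fr_up by (simp add: less_imp_le)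
    show "(\<lambda>n. mr + 1 / real (Suc n)) \<longlonglongrightarrow> mr"
      using tendsto_add[OF tendsto_const[of mr] LIMSEQ_inverse_real_of_nat] by (simp add: inverse_eq_divide)
  qed simp
  have "(\<lambda>n. Fa \<alpha> f (k (r n))) \<longlonglongrightarrow> m"
  proof -
    have "(\<lambda>n. Fr (r n)) \<longlonglongrightarrow> mr" using LIMSEQ_subseq_LIMSEQ[OF Frlim r] by (simp add: o_def)
    then have "(\<lambda>n. ennreal (Fr (r n))) \<longlonglongrightarrow> ennreal mr" by (rule tendsto_ennrealI)
    then show ?thesis unfolding FaFr mr(1) .
  qed
  then have limF: "liminf (\<lambda>n. Fa \<alpha> f (k (r n))) = m" by (rule lim_imp_Liminf[OF sequentially_bot])
  have "Fa \<alpha> f h \<le> liminf (\<lambda>n. E (k (r n))) + liminf (\<lambda>n. ennreal (\<alpha> / 2 * Q (k (r n))))"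
    unfolding FaQ using lsc fatou by (rule add_mono)
  also have "\<dots> \<le> liminf (\<lambda>n. Fa \<alpha> f (k (r n)))" unfolding FaQ by (rule liminf_add_ennreal)
  also have "\<dots> = m" by (rule limF)
  finally have "Fa \<alpha> f h \<le> m" .
  then have "ismin \<alpha> f h" unfolding ismin_def using Lh m_le by (blast intro: order_trans)
  then show ?thesis by blast
qed

lemma resolvent_ismin: "0 < \<alpha> \<Longrightarrow> L2 M f \<Longrightarrow> ismin \<alpha> f (resolvent M E \<alpha> f)"
  unfolding resolvent_eq using exists_min by (rule someI_ex)

end

lemma lux_le:
  assumes "0 < s" "E' (\<lambda>x. f x / s) \<le> 1"
  shows "luxemburg E' f \<le> s"
  unfolding luxemburg_def
  by (rule cInf_lower) (use assms in \<open>auto intro!: bdd_belowI[of _ 0]\<close>)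

lemma lux_nonneg:
  assumes "\<exists>s>0. E' (\<lambda>x. f x / s) \<le> 1"
  shows "0 \<le> luxemburg E' f"
  unfolding luxemburg_def
  by (rule cInf_greatest) (use assms in auto)

lemma lux_lt:
  assumes "\<exists>s>0. E' (\<lambda>x. f x / s) \<le> 1" "luxemburg E' f < d"
  shows "\<exists>s>0. s < d \<and> E' (\<lambda>x. f x / s) \<le> 1"
proof -
  have "{s. s > 0 \<and> E' (\<lambda>x. f x / s) \<le> 1} \<noteq> {}" using assms(1) by auto
  from cInf_lessD[OF this] assms(2) show ?thesis unfolding luxemburg_def by auto
qed

lemma diag_conv:
  assumes A: "range A \<subseteq> sets M" "(\<Union>i. A i) = space M" "\<And>i. emeasure M (A i) \<noteq> \<infinity>" "incseq A"
    and em: "\<And>m. e m \<in> borel_measurable M"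
    and small: "\<And>m. emeasure M (A m \<inter> {x\<in>space M. \<bar>e m x - 1\<bar> > 1 / Suc m}) \<le> ennreal (1 / Suc m)"
  shows "conv_loc_meas M e (\<lambda>x. 1)"
  unfolding conv_loc_meas_def
proof (intro ballI impI allI)
  fix B \<epsilon> assume B: "B \<in> sets M" "emeasure M B < \<infinity>" and eps: "(0::real) < \<epsilon>"
  have Am[measurable]: "A i \<in> sets M" for i using A(1) by auto
  have [measurable]: "e m \<in> borel_measurable M" for m using em .
  have dec: "decseq (\<lambda>n. B - A n)" using A(4) by (auto simp: decseq_def incseq_def)
  have inter: "(\<Inter>n. B - A n) = {}" using A(2) sets.sets_into_space[OF B(1)] by auto
  have lim1: "(\<lambda>n. emeasure M (B - A n)) \<longlonglongrightarrow> 0"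
  proof -
    have "(\<lambda>n. emeasure M (B - A n)) \<longlonglongrightarrow> emeasure M (\<Inter>n. B - A n)"
    proof (rule Lim_emeasure_decseq)
      show "range (\<lambda>n. B - A n) \<subseteq> sets M" using B(1) by auto
      show "decseq (\<lambda>n. B - A n)" by (rule dec)
      show "emeasure M (B - A i) \<noteq> \<infinity>" for i
        using B emeasure_mono[of "B - A i" B M] by (auto simp: top_unique)
    qed
    then show ?thesis unfolding inter by simp
  qed
  have lim2: "(\<lambda>n. ennreal (1 / Suc n)) \<longlonglongrightarrow> 0"
    using tendsto_ennrealI[OF LIMSEQ_inverse_real_of_nat] by (simp add: inverse_eq_divide)
  have ev: "eventually (\<lambda>n. 1 / real (Suc n) \<le> \<epsilon>) sequentially"
    using order_tendstoD(2)[OF LIMSEQ_inverse_real_of_nat eps]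
    by eventually_elim (simp add: inverse_eq_divide)
  show "(\<lambda>n. emeasure M (B \<inter> {x \<in> space M. \<epsilon> < \<bar>e n x - 1\<bar>})) \<longlonglongrightarrow> 0"
  proof (rule tendsto_sandwich[of "\<lambda>n. 0" _ _ "\<lambda>n. emeasure M (B - A n) + ennreal (1 / Suc n)"])
    show "\<forall>\<^sub>F n in sequentially. 0 \<le> emeasure M (B \<inter> {x \<in> space M. \<epsilon> < \<bar>e n x - 1\<bar>})" by simp
    show "\<forall>\<^sub>F n in sequentially. emeasure M (B \<inter> {x \<in> space M. \<epsilon> < \<bar>e n x - 1\<bar>})
             \<le> emeasure M (B - A n) + ennreal (1 / Suc n)"
      using ev
    proof eventually_elim
      case (elim n)
      have "B \<inter> {x \<in> space M. \<epsilon> < \<bar>e n x - 1\<bar>}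
          \<subseteq> (B - A n) \<union> (A n \<inter> {x\<in>space M. \<bar>e n x - 1\<bar> > 1 / Suc n})"
        using elim by auto
      then have "emeasure M (B \<inter> {x \<in> space M. \<epsilon> < \<bar>e n x - 1\<bar>})
          \<le> emeasure M ((B - A n) \<union> (A n \<inter> {x\<in>space M. \<bar>e n x - 1\<bar> > 1 / Suc n}))"
        by (intro emeasure_mono) (use B(1) in measurable)
      also have "\<dots> \<le> emeasure M (B - A n) + emeasure M (A n \<inter> {x\<in>space M. \<bar>e n x - 1\<bar> > 1 / Suc n})"
        by (intro emeasure_subadditive) (use B(1) in measurable)
      also have "\<dots> \<le> emeasure M (B - A n) + ennreal (1 / Suc n)"
        using small[of n] by (rule add_left_mono)
      finally show ?case .
    qed
    show "(\<lambda>n. emeasure M (B - A n) + ennreal (1 / Suc n)) \<longlonglongrightarrow> 0"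
      using tendsto_add[OF lim1 lim2] by simp
  qed simp
qed

context ndf
begin

lemma modular_nonempty:
  assumes "e \<in> modular_space M E"
  shows "\<exists>s>0. E (\<lambda>x. e x / s) \<le> 1"
proof -
  have "((\<lambda>t. E (\<lambda>x. t * e x)) \<longlongrightarrow> 0) (at_right 0)" using assms by (simp add: modular_space_def)
  then have "eventually (\<lambda>t. E (\<lambda>x. t * e x) < 1) (at_right (0::real))"
    by (rule order_tendstoD) simp
  then obtain b :: real where b: "b > 0" "\<And>y. y > 0 \<Longrightarrow> y < b \<Longrightarrow> E (\<lambda>x. y * e x) < 1"
    unfolding eventually_at_right_field by blast
  define t where "t = b / 2"
  have t: "0 < t" "t < b" unfolding t_def using b by auto
  have "(\<lambda>x. e x / (1 / t)) = (\<lambda>x. t * e x)" by (rule ext) simp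
  then have "E (\<lambda>x. e x / (1 / t)) \<le> 1" using b(2)[OF t] by simp
  then show ?thesis using t by (intro exI[of _ "1 / t"]) auto
qed

lemma small_energy:
  assumes e: "L2 M e" and ne: "\<exists>s>0. E (\<lambda>x. e x / s) \<le> 1" and lt: "luxemburg E e < d"
    and c: "0 < c" "c * d \<le> 1"
  shows "E (\<lambda>x. c * e x) \<le> ennreal (c * d)"
proof -
  obtain s where s: "0 < s" "s < d" "E (\<lambda>x. e x / s) \<le> 1" using lux_lt[OF ne lt] by blast
  have cs: "0 \<le> c * s" "c * s \<le> 1" using s c by (auto intro: order_trans[OF mult_left_mono[of s d c]])
  have "(\<lambda>x. c * e x) = (\<lambda>x. (c * s) * (e x / s))" using s by (intro ext) simp
  then have "E (\<lambda>x. c * e x) = E (\<lambda>x. (c * s) * (e x / s))" by simp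
  also have "\<dots> \<le> ennreal (c * s) * E (\<lambda>x. e x / s)" by (rule E_scale[OF L2_divide[OF e] cs])
  also have "\<dots> \<le> ennreal (c * s) * 1" using s(3) by (rule mult_left_mono) simp
  also have "\<dots> \<le> ennreal (c * d)" using s c by (simp add: ennreal_leI)
  finally show ?thesis .
qed

lemma energy_to_zero:
  assumes e: "\<And>n. e n \<in> modular_space M E" and lux: "(\<lambda>n. luxemburg E (e n)) \<longlonglongrightarrow> 0" and c: "0 < c"
  shows "(\<lambda>n. E (\<lambda>x. c * e n x)) \<longlonglongrightarrow> 0"
proof (rule order_tendstoI)
  fix y :: ennreal assume "y < 0" then show "eventually (\<lambda>n. y < E (\<lambda>x. c * e n x)) sequentially" by simp
next
  fix y :: ennreal assume y: "0 < y"
  obtain \<delta> :: real where d: "0 < \<delta>" "ennreal \<delta> < y"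
    using y by (metis dense ennreal_less_zero_iff ennreal_rat_dense less_imp_le_nat
          not_less_iff_gr_or_eq less_ennreal.abs_eq)
  define d where "d = min (1 / c) (\<delta> / c) / 2"
  have dpos: "0 < d" unfolding d_def using c d by simp
  have cd: "c * d \<le> 1" "c * d \<le> \<delta>" unfolding d_def using c d by (auto simp: field_simps min_def)
  have "eventually (\<lambda>n. luxemburg E (e n) < d) sequentially"
    using order_tendstoD(2)[OF lux dpos] .
  then show "eventually (\<lambda>n. E (\<lambda>x. c * e n x) < y) sequentially"
  proof eventually_elim
    case (elim n)
    have L: "L2 M (e n)" using e by (simp add: modular_space_def)
    have "E (\<lambda>x. c * e n x) \<le> ennreal (c * d)"
      by (rule small_energy[OF L modular_nonempty[OF e] elim c cd(1)])
    also have "\<dots> \<le> ennreal \<delta>" using cd(2) by (rule ennreal_leI)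
    also have "\<dots> < y" by (rule d(2))
    finally show ?case .
  qed
qed

end

context ndf
begin

lemma iii_imp_ii:
  assumes e: "\<And>n. e n \<in> modular_space M E"
    and conv: "conv_loc_meas M e (\<lambda>x. 1)"
    and lux: "(\<lambda>n. luxemburg E (e n)) \<longlonglongrightarrow> 0"
  shows "(\<lambda>x. 1) \<in> modular_space_e M E \<and> luxemburg (E_e M E) (\<lambda>x. 1) = 0"
proof -
  have Le: "L2 M (e n)" for n using e by (simp add: modular_space_def)
  have Ee0: "E_e M E (\<lambda>x. c) = 0" if c: "0 < c" for c
  proof -
    have mem: "(\<lambda>n x. c * e n x) \<in> {fs. (\<forall>n. fs n \<in> borel_measurable M) \<and> conv_loc_meas M fs (\<lambda>x. c)}"
    proof (intro CollectI conjI allI)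
      show "(\<lambda>x. c * e n x) \<in> borel_measurable M" for n using L2_measurable[OF L2_cmult[OF Le]] .
      show "conv_loc_meas M (\<lambda>n x. c * e n x) (\<lambda>x. c)"
        unfolding conv_loc_meas_def
      proof (intro ballI impI allI)
        fix B \<epsilon> assume B: "B \<in> sets M" "emeasure M B < \<infinity>" and eps: "(0::real) < \<epsilon>"
        have "{x \<in> space M. \<epsilon> < \<bar>c * e n x - c\<bar>} = {x \<in> space M. \<epsilon> / c < \<bar>e n x - 1\<bar>}" for n
        proof -
          have "\<bar>c * e n x - c\<bar> = c * \<bar>e n x - 1\<bar>" for x
          proof -
            have "c * e n x - c = c * (e n x - 1)" by (simp add: right_diff_distrib)
            then show ?thesis using c by (simp add: abs_mult)
          qed
          then show ?thesis using c by (auto simp: field_simps)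
        qed
        then show "(\<lambda>n. emeasure M (B \<inter> {x \<in> space M. \<epsilon> < \<bar>c * e n x - c\<bar>})) \<longlonglongrightarrow> 0"
          using conv B eps c unfolding conv_loc_meas_def by simp
      qed
    qed
    have "E_e M E (\<lambda>x. c) \<le> liminf (\<lambda>n. E_ext M E (\<lambda>x. c * e n x))"
      unfolding E_e_def by (rule INF_lower[OF mem])
    also have "\<dots> = liminf (\<lambda>n. E (\<lambda>x. c * e n x))"
      unfolding E_ext_def using L2_cmult[OF Le] by simp
    also have "\<dots> = 0" by (rule lim_imp_Liminf[OF sequentially_bot energy_to_zero[OF e lux c]])
    finally show ?thesis by simp
  qed
  have mod: "(\<lambda>x. 1) \<in> modular_space_e M E"
    unfolding modular_space_e_def
  proof (intro CollectI conjI)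
    show "(\<lambda>x. 1::real) \<in> borel_measurable M" by simp
    show "((\<lambda>t. E_e M E (\<lambda>x. t * 1)) \<longlongrightarrow> 0) (at_right 0)"
      by (rule tendsto_eventually) (use eventually_at_right_less[of "0::real"] in \<open>eventually_elim, simp add: Ee0\<close>)
  qed
  have "{s. s > 0 \<and> E_e M E (\<lambda>x. 1 / s) \<le> 1} = {0::real<..}" using Ee0 by auto
  then have "luxemburg (E_e M E) (\<lambda>x. 1) = 0" unfolding luxemburg_def by simp
  with mod show ?thesis by simp
qed

end

context ndf
begin

lemma ii_imp_iii_step:
  assumes c: "0 < c" and Ee: "E_e M E (\<lambda>x. c) \<le> 1"
    and A: "A \<in> sets M" "emeasure M A < \<infinity>" and \<delta>: "0 < \<delta>"
  shows "\<exists>e. e \<in> modular_space M E \<and> (\<forall>x\<in>space M. 0 \<le> e x \<and> e x \<le> 1)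
            \<and> luxemburg E e \<le> 2 / c
            \<and> emeasure M (A \<inter> {x\<in>space M. \<bar>e x - 1\<bar> > \<delta>}) \<le> ennreal \<delta>"
proof -
  have "E_e M E (\<lambda>x. c) < 2" using Ee by (rule le_less_trans) simp
  then obtain fs where fs: "\<And>n. fs n \<in> borel_measurable M" "conv_loc_meas M fs (\<lambda>x. c)"
    and li: "liminf (\<lambda>n. E_ext M E (fs n)) < 2"
    unfolding E_e_def by (auto simp: INF_less_iff)
  have fr: "frequently (\<lambda>n. E_ext M E (fs n) < 2) sequentially"
  proof (rule ccontr)
    assume "\<not> frequently (\<lambda>n. E_ext M E (fs n) < 2) sequentially"
    then have "eventually (\<lambda>n. 2 \<le> E_ext M E (fs n)) sequentially"
      by (simp add: not_frequently not_less)
    then have "2 \<le> liminf (\<lambda>n. E_ext M E (fs n))" by (rule Liminf_bounded)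
    then show False using li by simp
  qed
  have cd: "0 < c * \<delta>" using c \<delta> by simp
  have ev: "eventually (\<lambda>n. emeasure M (A \<inter> {x\<in>space M. c * \<delta> < \<bar>fs n x - c\<bar>}) < ennreal \<delta>) sequentially"
  proof -
    have "(\<lambda>n. emeasure M (A \<inter> {x\<in>space M. c * \<delta> < \<bar>fs n x - c\<bar>})) \<longlonglongrightarrow> 0"
      using fs(2) A cd unfolding conv_loc_meas_def by blast
    then show ?thesis by (rule order_tendstoD) (use \<delta> in simp)
  qed
  obtain n where n1: "E_ext M E (fs n) < 2"
    and n2: "emeasure M (A \<inter> {x\<in>space M. c * \<delta> < \<bar>fs n x - c\<bar>}) < ennreal \<delta>"
    using frequently_ex[OF frequently_eventually_frequently[OF fr ev]] by blast
  have Lf: "L2 M (fs n)" using n1 unfolding E_ext_def by (auto split: if_splits)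
  have Ef: "E (fs n) < 2" using n1 Lf unfolding E_ext_def by simp
  define \<phi> where "\<phi> = (\<lambda>y::real. max 0 (min y c))"
  have \<phi>0: "\<phi> 0 = 0" unfolding \<phi>_def using c by simp
  have \<phi>L: "\<bar>\<phi> s - \<phi> t\<bar> \<le> \<bar>s - t\<bar>" for s t unfolding \<phi>_def by (simp add: max_def min_def abs_if)
  have \<phi>m: "(\<lambda>x. \<phi> (fs n x)) \<in> borel_measurable M" unfolding \<phi>_def using fs(1)[of n] by measurable
  have L\<phi>: "L2 M (\<lambda>x. \<phi> (fs n x))"
  proof (rule L2_bound[OF \<phi>m Lf])
    fix x show "\<bar>\<phi> (fs n x)\<bar> \<le> \<bar>fs n x\<bar>" using \<phi>L[of "fs n x" 0] \<phi>0 by simp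
  qed
  have E\<phi>: "E (\<lambda>x. \<phi> (fs n x)) \<le> 2"
    using E_contraction[OF Lf \<phi>0 \<phi>L \<phi>m] Ef by simp
  define e where "e = (\<lambda>x. \<phi> (fs n x) / c)"
  have Le: "L2 M e" unfolding e_def by (rule L2_divide[OF L\<phi>])
  have bnd: "\<forall>x\<in>space M. 0 \<le> e x \<and> e x \<le> 1" unfolding e_def \<phi>_def using c by auto
  have scale: "E (\<lambda>x. t * e x) \<le> ennreal (2 * t / c)" if t: "0 < t" "t \<le> c" for t
  proof -
    have "(\<lambda>x. t * e x) = (\<lambda>x. (t / c) * \<phi> (fs n x))" unfolding e_def by (rule ext) simp
    then have "E (\<lambda>x. t * e x) = E (\<lambda>x. (t / c) * \<phi> (fs n x))" by simp
    also have "\<dots> \<le> ennreal (t / c) * E (\<lambda>x. \<phi> (fs n x))"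
      by (rule E_scale[OF L\<phi>]) (use t c in auto)
    also have "\<dots> \<le> ennreal (t / c) * 2" using E\<phi> by (rule mult_left_mono) simp
    also have "\<dots> = ennreal (t / c * 2)" by (subst ennreal_mult) (use t c in auto)
    also have "\<dots> = ennreal (2 * t / c)" by (simp add: mult.commute)
    finally show ?thesis .
  qed
  have mod: "e \<in> modular_space M E"
    unfolding modular_space_def
  proof (intro CollectI conjI Le)
    show "((\<lambda>t. E (\<lambda>x. t * e x)) \<longlongrightarrow> 0) (at_right 0)"
    proof (rule tendsto_sandwich[of "\<lambda>t. 0" _ _ "\<lambda>t. ennreal (2 * t / c)"])
      show "\<forall>\<^sub>F t in at_right 0. 0 \<le> E (\<lambda>x. t * e x)" by simp
      have "\<forall>\<^sub>F t in at_right (0::real). 0 < t \<and> t < c"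
        using eventually_at_right_less[of "0::real"] eventually_at_right_field[of "\<lambda>t. t < c" 0] c
        by (auto intro: eventually_conj)
      then show "\<forall>\<^sub>F t in at_right 0. E (\<lambda>x. t * e x) \<le> ennreal (2 * t / c)"
        by eventually_elim (auto intro: scale)
      have "((\<lambda>t. 2 * t / c) \<longlongrightarrow> 2 * 0 / c) (at_right (0::real))"
        by (intro tendsto_intros) (use c in auto)
      then show "((\<lambda>t. ennreal (2 * t / c)) \<longlongrightarrow> 0) (at_right 0)"
        using tendsto_ennrealI by fastforce
    qed simp
  qed
  have lux: "luxemburg E e \<le> 2 / c"
  proof (rule lux_le)
    show "0 < 2 / c" using c by simp
    have "(\<lambda>x. e x / (2 / c)) = (\<lambda>x. 1 / 2 * \<phi> (fs n x))" unfolding e_def using c by (intro ext) simp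
    then have "E (\<lambda>x. e x / (2 / c)) = E (\<lambda>x. 1 / 2 * \<phi> (fs n x))" by simp
    also have "\<dots> \<le> ennreal (1 / 2) * E (\<lambda>x. \<phi> (fs n x))" by (rule E_scale[OF L\<phi>]) auto
    also have "\<dots> \<le> ennreal (1 / 2) * 2" using E\<phi> by (rule mult_left_mono) simp
    also have "\<dots> = ennreal (1 / 2 * 2)" by (subst ennreal_mult) auto
    also have "\<dots> = 1" by simp
    finally show "E (\<lambda>x. e x / (2 / c)) \<le> 1" .
  qed
  have sub: "A \<inter> {x\<in>space M. \<bar>e x - 1\<bar> > \<delta>} \<subseteq> A \<inter> {x\<in>space M. c * \<delta> < \<bar>fs n x - c\<bar>}"
  proof safe
    fix x assume x: "x \<in> space M" "\<delta> < \<bar>e x - 1\<bar>"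
    have "\<bar>e x - 1\<bar> = \<bar>\<phi> (fs n x) - \<phi> c\<bar> / c"
      unfolding e_def \<phi>_def using c by (simp add: field_simps abs_div_pos)
    also have "\<dots> \<le> \<bar>fs n x - c\<bar> / c" using \<phi>L[of "fs n x" c] c by (simp add: divide_right_mono)
    finally have "\<delta> < \<bar>fs n x - c\<bar> / c" using x(2) by simp
    then show "c * \<delta> < \<bar>fs n x - c\<bar>" using c by (simp add: field_simps)
  qed
  have "emeasure M (A \<inter> {x\<in>space M. \<bar>e x - 1\<bar> > \<delta>}) \<le> emeasure M (A \<inter> {x\<in>space M. c * \<delta> < \<bar>fs n x - c\<bar>})"
    by (rule emeasure_mono[OF sub]) (use A(1) fs(1)[of n] in measurable)
  also have "\<dots> \<le> ennreal \<delta>" using n2 by simp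
  finally show ?thesis using mod bnd lux by blast
qed

end

context ndf
begin

lemma ii_imp_iii:
  assumes mod: "(\<lambda>x. 1) \<in> modular_space_e M E" and lux0: "luxemburg (E_e M E) (\<lambda>x. 1) = 0"
  shows "\<exists>e :: nat \<Rightarrow> 'a \<Rightarrow> real. (\<forall>n. e n \<in> modular_space M E) \<and>
                 (\<forall>n. \<forall>x\<in>space M. 0 \<le> e n x \<and> e n x \<le> 1) \<and>
                 conv_loc_meas M e (\<lambda>x. 1) \<and>
                 (\<lambda>n. luxemburg E (e n)) \<longlonglongrightarrow> 0"
proof -
  obtain A :: "nat \<Rightarrow> 'a set" where A: "range A \<subseteq> sets M" "(\<Union>i. A i) = space M"
    "\<And>i. emeasure M (A i) \<noteq> \<infinity>" "incseq A"
    using sigma_finite_incseq by blast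
  have ne: "\<exists>s>0. E_e M E (\<lambda>x. 1 / s) \<le> 1"
  proof -
    have "((\<lambda>t. E_e M E (\<lambda>x. t * 1)) \<longlongrightarrow> 0) (at_right 0)" using mod by (simp add: modular_space_e_def)
    then have "eventually (\<lambda>t. E_e M E (\<lambda>x. t * 1) < 1) (at_right (0::real))"
      by (rule order_tendstoD) simp
    then obtain b :: real where b: "b > 0" "\<And>y. y > 0 \<Longrightarrow> y < b \<Longrightarrow> E_e M E (\<lambda>x. y * 1) < 1"
      unfolding eventually_at_right_field by blast
    define t where "t = b / 2"
    have t: "0 < t" "t < b" unfolding t_def using b by auto
    have "(\<lambda>x::'a. 1 / (1 / t)) = (\<lambda>x. t * 1)" by (rule ext) simp
    then have "E_e M E (\<lambda>x. 1 / (1 / t)) \<le> 1" using b(2)[OF t] by simp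
    then show ?thesis using t by (intro exI[of _ "1 / t"]) auto
  qed
  have "\<forall>m. \<exists>e. e \<in> modular_space M E \<and> (\<forall>x\<in>space M. 0 \<le> e x \<and> e x \<le> 1)
            \<and> luxemburg E e \<le> 2 / Suc m
            \<and> emeasure M (A m \<inter> {x\<in>space M. \<bar>e x - 1\<bar> > 1 / Suc m}) \<le> ennreal (1 / Suc m)"
  proof
    fix m :: nat
    have "luxemburg (E_e M E) (\<lambda>x. 1) < 1 / Suc m" using lux0 by simp
    from lux_lt[OF ne this] obtain s where s: "0 < s" "s < 1 / Suc m" "E_e M E (\<lambda>x. 1 / s) \<le> 1"
      by auto
    have Am: "A m \<in> sets M" "emeasure M (A m) < \<infinity>" using A(1) A(3)[of m] by (auto simp: less_top)
    have c': "0 < 1 / s" using s by simp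
    have d': "0 < 1 / real (Suc m)" by simp
    from ii_imp_iii_step[OF c' s(3) Am(1) Am(2) d'] obtain e where e: "e \<in> modular_space M E \<and> (\<forall>x\<in>space M. 0 \<le> e x \<and> e x \<le> 1)
      \<and> luxemburg E e \<le> 2 / (1 / s)
      \<and> emeasure M (A m \<inter> {x\<in>space M. \<bar>e x - 1\<bar> > 1 / Suc m}) \<le> ennreal (1 / Suc m)"
      by (elim exE)
    have "2 / (1 / s) \<le> 2 / Suc m" using s by (simp add: field_simps)
    then show "\<exists>e. e \<in> modular_space M E \<and> (\<forall>x\<in>space M. 0 \<le> e x \<and> e x \<le> 1)
            \<and> luxemburg E e \<le> 2 / Suc m
            \<and> emeasure M (A m \<inter> {x\<in>space M. \<bar>e x - 1\<bar> > 1 / Suc m}) \<le> ennreal (1 / Suc m)"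
      using e by (intro exI[of _ e]) (auto intro: order_trans)
  qed
  then have "\<exists>e. \<forall>m. e m \<in> modular_space M E \<and> (\<forall>x\<in>space M. 0 \<le> e m x \<and> e m x \<le> 1)
            \<and> luxemburg E (e m) \<le> 2 / Suc m
            \<and> emeasure M (A m \<inter> {x\<in>space M. \<bar>e m x - 1\<bar> > 1 / Suc m}) \<le> ennreal (1 / Suc m)"
    by (rule choice)
  then obtain e where eall: "\<forall>m. e m \<in> modular_space M E \<and> (\<forall>x\<in>space M. 0 \<le> e m x \<and> e m x \<le> 1)
            \<and> luxemburg E (e m) \<le> 2 / Suc m
            \<and> emeasure M (A m \<inter> {x\<in>space M. \<bar>e m x - 1\<bar> > 1 / Suc m}) \<le> ennreal (1 / Suc m)" ..
  have e: "\<And>m. e m \<in> modular_space M E" "\<And>m. \<forall>x\<in>space M. 0 \<le> e m x \<and> e m x \<le> 1"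
    "\<And>m. luxemburg E (e m) \<le> 2 / Suc m"
    "\<And>m. emeasure M (A m \<inter> {x\<in>space M. \<bar>e m x - 1\<bar> > 1 / Suc m}) \<le> ennreal (1 / Suc m)"
    using eall by simp_all
  have conv: "conv_loc_meas M e (\<lambda>x. 1)"
    by (rule diag_conv[OF A]) (use e(1,4) in \<open>auto simp: modular_space_def L2_def\<close>)
  have lux: "(\<lambda>n. luxemburg E (e n)) \<longlonglongrightarrow> 0"
  proof (rule tendsto_sandwich[of "\<lambda>n. 0" _ _ "\<lambda>n. 2 / Suc n"])
    show "\<forall>\<^sub>F n in sequentially. 0 \<le> luxemburg E (e n)"
    proof (intro always_eventually allI)
      fix n show "0 \<le> luxemburg E (e n)" by (rule lux_nonneg[of E "e n", OF modular_nonempty[OF e(1)]])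
    qed
    show "\<forall>\<^sub>F n in sequentially. luxemburg E (e n) \<le> 2 / Suc n" using e(3) by simp
    show "(\<lambda>n. 2 / real (Suc n)) \<longlonglongrightarrow> 0"
      using tendsto_mult[OF tendsto_const[of 2] LIMSEQ_inverse_real_of_nat] by (simp add: inverse_eq_divide)
  qed simp
  show ?thesis using e(1,2) conv lux by blast
qed

end

lemma markov_fin:
  fixes f :: "'a \<Rightarrow> real"
  assumes f[measurable]: "f \<in> borel_measurable M" and fi: "integrable M f" and d: "0 < d"
  shows "emeasure M {x\<in>space M. d < f x} < \<infinity>"
proof -
  have "emeasure M {x\<in>space M. d < f x} = (\<integral>\<^sup>+x. indicator {x\<in>space M. d < f x} x \<partial>M)"
    by (simp add: nn_integral_indicator)
  also have "\<dots> \<le> (\<integral>\<^sup>+x. ennreal (\<bar>f x\<bar> / d) \<partial>M)"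
    by (rule nn_integral_mono) (use d in \<open>auto split: split_indicator simp: field_simps\<close>)
  also have "\<dots> = ennreal (\<integral>x. \<bar>f x\<bar> / d \<partial>M)"
    by (rule nn_integral_eq_integral) (use fi d in auto)
  also have "\<dots> < \<infinity>" by simp
  finally show ?thesis .
qed

context ndf
begin

lemma iii_imp_crit:
  assumes e: "\<And>n. e n \<in> modular_space M E"
    and bnd: "\<And>n. \<forall>x\<in>space M. 0 \<le> e n x \<and> e n x \<le> 1"
    and conv: "conv_loc_meas M e (\<lambda>x. 1)"
    and lux: "(\<lambda>n. luxemburg E (e n)) \<longlonglongrightarrow> 0"
  shows "critical M E"
  unfolding critical_def
proof (intro allI impI)
  fix f :: "'a \<Rightarrow> real"
  assume "f \<in> borel_measurable M \<and> integrable M f \<and> (\<forall>x\<in>space M. 0 \<le> f x)"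
  then have fm[measurable]: "f \<in> borel_measurable M" and fi: "integrable M f"
    and fpos: "\<And>x. x \<in> space M \<Longrightarrow> 0 \<le> f x" by auto
  define f1 where "f1 = (\<lambda>y. min (f y) 1)"
  have f1m[measurable]: "f1 \<in> borel_measurable M" unfolding f1_def by measurable
  have Lf1: "L2 M f1"
  proof -
    have "integrable M (\<lambda>x. (f1 x)\<^sup>2)"
    proof (rule Bochner_Integration.integrable_bound[OF fi])
      show "(\<lambda>x. (f1 x)\<^sup>2) \<in> borel_measurable M" by measurable
      show "AE x in M. norm ((f1 x)\<^sup>2) \<le> norm (f x)"
      proof (rule AE_I2)
        fix x assume x: "x \<in> space M"
        show "norm ((f1 x)\<^sup>2) \<le> norm (f x)"
        proof (cases "f x \<le> 1")
          case True
          then have "(f x)\<^sup>2 \<le> f x" using fpos[OF x] by (simp add: power2_eq_square mult_left_le)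
          then show ?thesis using True fpos[OF x] unfolding f1_def by simp
        next
          case False then show ?thesis unfolding f1_def by simp
        qed
      qed
    qed
    then show ?thesis using f1m by (simp add: L2_def)
  qed
  have f1pos: "\<And>x. x \<in> space M \<Longrightarrow> 0 \<le> f1 x" unfolding f1_def using fpos by simp
  define \<alpha> where "\<alpha> = (\<lambda>k::nat. 1 / real (Suc k))"
  have apos: "0 < \<alpha> k" for k unfolding \<alpha>_def by simp
  define h where "h = (\<lambda>k. resolvent M E (\<alpha> k) f1)"
  have hm: "ismin (\<alpha> k) f1 (h k)" for k unfolding h_def by (rule resolvent_ismin[OF apos Lf1])
  have Lh: "L2 M (h k)" for k by (rule ismin_L2[OF hm])
  have hmeas[measurable]: "h k \<in> borel_measurable M" for k using Lh[of k] by (simp add: L2_def)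
  have mono: "AE x in M. \<forall>k. h k x \<le> h (Suc k) x"
  proof (subst AE_all_countable, intro allI)
    fix k
    have "\<alpha> (Suc k) < \<alpha> k" unfolding \<alpha>_def by (simp add: frac_less2)
    then show "AE x in M. h k x \<le> h (Suc k) x"
      by (rule mono_alpha[OF hm hm apos _ Lf1 f1pos])
  qed
  have green_ge: "ereal (h j x) \<le> green M E f x" if x: "\<forall>k. h k x \<le> h (Suc k) x" for x j
  proof -
    have inc: "incseq (\<lambda>k. h k x)" using x by (simp add: incseq_SucI)
    have "ereal (h j x) \<le> liminf (\<lambda>k. ereal (h k x))"
    proof (rule Liminf_bounded)
      show "\<forall>\<^sub>F k in sequentially. ereal (h j x) \<le> ereal (h k x)"
        using eventually_ge_at_top[of j] by eventually_elim (use inc in \<open>simp add: incseq_def\<close>)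
    qed
    also have "\<dots> \<le> green M E f x" unfolding green_def
    proof (rule Liminf_mono, intro always_eventually allI)
      fix k
      have "(\<lambda>y. min (f y) (real 1)) = f1" unfolding f1_def by simp
      then have "ereal (h k x) = ereal (resolvent M E (1 / real (Suc k)) (\<lambda>y. min (f y) (real 1)) x)"
        unfolding h_def \<alpha>_def by simp
      also have "\<dots> \<le> resolvent_pos M E (1 / real (Suc k)) f x"
        unfolding resolvent_pos_def by (rule SUP_upper) simp
      finally show "ereal (h k x) \<le> resolvent_pos M E (1 / real (Suc k)) f x" .
    qed
    finally show ?thesis .
  qed
  define B where "B = (\<lambda>N j. {x\<in>space M. 1 / real (Suc j) < f x \<and> (\<forall>k. h k x \<le> real (Suc N))})"
  have Bm[measurable]: "B N j \<in> sets M" for N j unfolding B_def by measurable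
  have Bnull: "emeasure M (B N j) = 0" for N j
  proof -
    define \<delta> where "\<delta> = 1 / real (Suc j)"
    define Nr where "Nr = real (Suc N)"
    have dpos: "0 < \<delta>" "\<delta> \<le> 1" unfolding \<delta>_def by (auto simp: field_simps)
    have Npos: "0 < Nr" unfolding Nr_def by simp
    define c where "c = 2 * Nr"
    have cpos: "0 < c" unfolding c_def using Npos by simp
    have Bfin: "emeasure M (B N j) < \<infinity>"
    proof -
      have "B N j \<subseteq> {x\<in>space M. \<delta> < f x}" unfolding B_def \<delta>_def by auto
      then have "emeasure M (B N j) \<le> emeasure M {x\<in>space M. \<delta> < f x}"
        by (intro emeasure_mono) measurable
      also have "\<dots> < \<infinity>" by (rule markov_fin[OF fm fi dpos(1)])
      finally show ?thesis .
    qed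
    have Le: "L2 M (e m)" for m using e[of m] by (simp add: modular_space_def)
    have em[measurable]: "e m \<in> borel_measurable M" for m using Le[of m] by (simp add: L2_def)
    define K where "K = ennreal (\<delta> * Nr / 2)"
    have Kpos: "0 < K" unfolding K_def using dpos Npos by simp
    define G where "G = (\<lambda>m. {x\<in>space M. \<bar>e m x - 1\<bar> \<le> 1 / 4})"
    define Bad where "Bad = (\<lambda>m. {x\<in>space M. 1 / 4 < \<bar>e m x - 1\<bar>})"
    have Gm[measurable]: "G m \<in> sets M" for m unfolding G_def by measurable
    have Badm[measurable]: "Bad m \<in> sets M" for m unfolding Bad_def by measurable
    have step1: "K * emeasure M (B N j \<inter> G m) \<le> E (\<lambda>x. c * e m x)" for m
    proof -
      define u where "u = (\<lambda>x. c * e m x)"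
      have Lu: "L2 M u" unfolding u_def by (rule L2_cmult[OF Le])
      have le_k: "K * emeasure M (B N j \<inter> G m) \<le> E u + ennreal (\<alpha> k / 2 * (\<integral>x. (u x)\<^sup>2 \<partial>M))" for k
      proof -
        define \<phi> where "\<phi> = (\<lambda>x. f1 x * max (u x - h k x) 0)"
        have \<phi>i: "integrable M \<phi>" unfolding \<phi>_def
          by (rule L2_mult_int[OF Lf1 L2_max[OF L2_diff[OF Lu Lh] L2_zero]])
        have \<phi>pos: "x \<in> space M \<Longrightarrow> 0 \<le> \<phi> x" for x unfolding \<phi>_def using f1pos by simp
        have "K * emeasure M (B N j \<inter> G m) = (\<integral>\<^sup>+x. K * indicator (B N j \<inter> G m) x \<partial>M)"
          by (rule nn_integral_cmult_indicator[symmetric]) measurable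
        also have "\<dots> \<le> (\<integral>\<^sup>+x. ennreal (\<phi> x) \<partial>M)"
        proof (rule nn_integral_mono)
          fix x assume x: "x \<in> space M"
          show "K * indicator (B N j \<inter> G m) x \<le> ennreal (\<phi> x)"
          proof (cases "x \<in> B N j \<inter> G m")
            case True
            then have fx: "\<delta> < f x" and hk: "h k x \<le> Nr" and ex: "\<bar>e m x - 1\<bar> \<le> 1 / 4"
              unfolding B_def G_def \<delta>_def Nr_def by auto
            have f1x: "\<delta> \<le> f1 x" unfolding f1_def using fx dpos by simp
            have "3 / 4 \<le> e m x" using ex by linarith
            then have "c * (3 / 4) \<le> c * e m x" using cpos by (simp add: mult_left_mono)
            then have "Nr / 2 \<le> u x - h k x" unfolding u_def c_def using hk by simp
            then have mx: "Nr / 2 \<le> max (u x - h k x) 0" by (rule order_trans[OF _ max.cobounded1])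
            have "\<delta> * (Nr / 2) \<le> f1 x * max (u x - h k x) 0"
              by (rule mult_mono[OF f1x mx]) (use dpos f1x Npos in auto)
            then show ?thesis using True unfolding K_def \<phi>_def by (simp add: ennreal_leI)
          next
            case False then show ?thesis by simp
          qed
        qed
        also have "\<dots> = ennreal (\<integral>x. \<phi> x \<partial>M)"
          by (rule nn_integral_eq_integral[OF \<phi>i]) (use \<phi>pos in auto)
        also have "\<dots> \<le> E u + ennreal (\<alpha> k / 2 * (\<integral>x. (u x)\<^sup>2 \<partial>M))"
          unfolding \<phi>_def by (rule key_ineq[OF hm apos Lf1 Lu])
        finally show ?thesis .
      qed
      have lim: "(\<lambda>k. E u + ennreal (\<alpha> k / 2 * (\<integral>x. (u x)\<^sup>2 \<partial>M))) \<longlonglongrightarrow> E u + 0"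
      proof (rule tendsto_add[OF tendsto_const])
        have eqf: "(\<lambda>k. \<alpha> k / 2 * (\<integral>x. (u x)\<^sup>2 \<partial>M)) = (\<lambda>k. inverse (real (Suc k)) * ((\<integral>x. (u x)\<^sup>2 \<partial>M) / 2))"
          unfolding \<alpha>_def by (simp add: inverse_eq_divide)
        have "(\<lambda>k. \<alpha> k / 2 * (\<integral>x. (u x)\<^sup>2 \<partial>M)) \<longlonglongrightarrow> 0"
          unfolding eqf using tendsto_mult[OF LIMSEQ_inverse_real_of_nat tendsto_const[of "(\<integral>x. (u x)\<^sup>2 \<partial>M) / 2"]] by simp
        then show "(\<lambda>k. ennreal (\<alpha> k / 2 * (\<integral>x. (u x)\<^sup>2 \<partial>M))) \<longlonglongrightarrow> 0"
          using tendsto_ennrealI by fastforce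
      qed
      have "K * emeasure M (B N j \<inter> G m) \<le> E u + 0"
        by (rule LIMSEQ_le_const[OF lim]) (use le_k in blast)
      then show ?thesis unfolding u_def by simp
    qed
    have step2: "K * emeasure M (B N j) \<le> E (\<lambda>x. c * e m x) + K * emeasure M (B N j \<inter> Bad m)" for m
    proof -
      have "B N j \<subseteq> (B N j \<inter> G m) \<union> (B N j \<inter> Bad m)" unfolding B_def G_def Bad_def by auto
      then have "emeasure M (B N j) \<le> emeasure M ((B N j \<inter> G m) \<union> (B N j \<inter> Bad m))"
        by (intro emeasure_mono) measurable
      also have "\<dots> \<le> emeasure M (B N j \<inter> G m) + emeasure M (B N j \<inter> Bad m)"
        by (intro emeasure_subadditive) measurable
      finally have "K * emeasure M (B N j) \<le> K * (emeasure M (B N j \<inter> G m) + emeasure M (B N j \<inter> Bad m))"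
        by (rule mult_left_mono) simp
      also have "\<dots> = K * emeasure M (B N j \<inter> G m) + K * emeasure M (B N j \<inter> Bad m)"
        by (simp add: distrib_left)
      also have "\<dots> \<le> E (\<lambda>x. c * e m x) + K * emeasure M (B N j \<inter> Bad m)"
        using step1[of m] by (rule add_right_mono)
      finally show ?thesis .
    qed
    have lim2: "(\<lambda>m. E (\<lambda>x. c * e m x) + K * emeasure M (B N j \<inter> Bad m)) \<longlonglongrightarrow> 0 + K * 0"
    proof (rule tendsto_add)
      show "(\<lambda>m. E (\<lambda>x. c * e m x)) \<longlonglongrightarrow> 0" by (rule energy_to_zero[OF e lux cpos])
      have "(\<lambda>m. emeasure M (B N j \<inter> {x\<in>space M. 1 / 4 < \<bar>e m x - 1\<bar>})) \<longlonglongrightarrow> 0"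
      proof -
        have cl: "\<And>A \<epsilon>. A \<in> sets M \<Longrightarrow> emeasure M A < \<infinity> \<Longrightarrow> (0::real) < \<epsilon> \<Longrightarrow>
            (\<lambda>n. emeasure M (A \<inter> {x\<in>space M. \<epsilon> < \<bar>e n x - 1\<bar>})) \<longlonglongrightarrow> 0"
          using conv unfolding conv_loc_meas_def by blast
        show ?thesis by (rule cl[OF Bm Bfin]) simp
      qed
      then show "(\<lambda>m. K * emeasure M (B N j \<inter> Bad m)) \<longlonglongrightarrow> K * 0"
        unfolding Bad_def by (rule ennreal_tendsto_cmult[rotated]) (simp add: K_def)
    qed
    have "K * emeasure M (B N j) \<le> 0 + K * 0"
      by (rule LIMSEQ_le_const[OF lim2]) (use step2 in blast)
    then have "K * emeasure M (B N j) = 0" by simp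
    then show ?thesis using Kpos by auto
  qed
  have AEB: "AE x in M. \<forall>N j. x \<notin> B N j"
    by (subst AE_all_countable, intro allI, subst AE_all_countable, intro allI AE_not_in)
       (use Bnull in \<open>auto intro: null_setsI\<close>)
  show "AE x in M. \<not> (0 < f x \<and> green M E f x < \<infinity>)"
    using mono AEB
  proof (rule AE_mp[OF _ AE_mp], intro AE_I2 impI notI)
    fix x assume x: "x \<in> space M" and mx: "\<forall>k. h k x \<le> h (Suc k) x" and nB: "\<forall>N j. x \<notin> B N j"
      and fg: "0 < f x \<and> green M E f x < \<infinity>"
    obtain j where j: "inverse (real (Suc j)) < f x" using reals_Archimedean fg by blast
    have gl: "ereal (h 0 x) \<le> green M E f x" by (rule green_ge[OF mx])
    obtain g where g: "green M E f x = ereal g"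
      using fg gl by (cases "green M E f x") auto
    obtain N :: nat where N: "g < real N" using reals_Archimedean2 by blast
    have "\<forall>k. h k x \<le> real (Suc N)"
    proof
      fix k have "ereal (h k x) \<le> ereal g" using green_ge[OF mx, of k] g by simp
      then show "h k x \<le> real (Suc N)" using N by simp
    qed
    then have "x \<in> B N j" unfolding B_def using x j by (simp add: inverse_eq_divide)
    then show False using nB by blast
  qed
qed

end

context ndf
begin

lemma crit_step:
  fixes g :: "'a \<Rightarrow> real"
  assumes crit: "critical M E"
    and g: "g \<in> borel_measurable M" "\<And>x. 0 < g x" "\<And>x. g x \<le> 1" "integrable M g"
    and A: "A \<in> sets M" "emeasure M A < \<infinity>" and c: "1 \<le> c" and \<delta>: "0 < \<delta>" and \<eta>: "0 \<le> \<eta>"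
  shows "\<exists>e. e \<in> modular_space M E \<and> (\<forall>x\<in>space M. 0 \<le> e x \<and> e x \<le> 1)
            \<and> luxemburg E e \<le> 1 / c
            \<and> emeasure M (A \<inter> {x\<in>space M. \<bar>e x - 1\<bar> > \<eta>}) \<le> ennreal \<delta>"
proof -
  have [measurable]: "g \<in> borel_measurable M" using g(1) .
  have cpos: "0 < c" using c by simp
  define G where "G = (\<integral>x. g x \<partial>M)"
  have G0: "0 \<le> G" unfolding G_def by (intro integral_nonneg_AE AE_I2) (simp add: g(2) less_imp_le)
  define \<epsilon> where "\<epsilon> = 1 / (c * (G + 1))"
  have cg: "1 \<le> c * (G + 1)" using mult_mono[of 1 c 1 "G + 1"] c G0 by simp
  have eps: "0 < \<epsilon>" "\<epsilon> \<le> 1" unfolding \<epsilon>_def using cg by auto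
  define f where "f = (\<lambda>x. \<epsilon> * g x)"
  have fm[measurable]: "f \<in> borel_measurable M" unfolding f_def by measurable
  have fpos: "0 < f x" for x unfolding f_def using eps g(2) by simp
  have fle: "f x \<le> 1" for x unfolding f_def using eps g(2,3) by (simp add: mult_le_one less_imp_le)
  have fi: "integrable M f" unfolding f_def using g(4) by simp
  have Lf: "L2 M f"
  proof -
    have "integrable M (\<lambda>x. (f x)\<^sup>2)"
    proof (rule Bochner_Integration.integrable_bound[OF fi])
      show "(\<lambda>x. (f x)\<^sup>2) \<in> borel_measurable M" by measurable
      show "AE x in M. norm ((f x)\<^sup>2) \<le> norm (f x)"
        using fpos fle by (intro AE_I2) (simp add: power2_eq_square mult_le_one less_imp_le abs_of_pos)
    qed
    then show ?thesis by (simp add: L2_def)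
  qed
  have intf: "c * (\<integral>x. f x \<partial>M) \<le> 1"
  proof -
    have "c * (\<integral>x. f x \<partial>M) = c * \<epsilon> * G" unfolding f_def G_def by simp
    also have "\<dots> = G / (G + 1)"
    proof -
      have "0 < G + 1" using G0 by simp
      then show ?thesis unfolding \<epsilon>_def using cpos by simp
    qed
    also have "\<dots> \<le> 1" using G0 by simp
    finally show ?thesis .
  qed
  define \<alpha> where "\<alpha> = (\<lambda>k::nat. 1 / real (Suc k))"
  have apos: "0 < \<alpha> k" for k unfolding \<alpha>_def by simp
  define h where "h = (\<lambda>k. resolvent M E (\<alpha> k) f)"
  define h0 where "h0 = (\<lambda>k. resolvent M E (\<alpha> k) (\<lambda>y. 0))"
  have hm: "ismin (\<alpha> k) f (h k)" for k unfolding h_def by (rule resolvent_ismin[OF apos Lf])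
  have h0m: "ismin (\<alpha> k) (\<lambda>y. 0) (h0 k)" for k unfolding h0_def by (rule resolvent_ismin[OF apos]) simp
  have Lh: "L2 M (h k)" for k by (rule ismin_L2[OF hm])
  have hmeas[measurable]: "h k \<in> borel_measurable M" for k using Lh[of k] by (simp add: L2_def)
  have rp: "resolvent_pos M E (\<alpha> k) f x = max (ereal (h0 k x)) (ereal (h k x))" for k x
  proof -
    have fn: "(\<lambda>y. min (f y) (real n)) = (if n = 0 then (\<lambda>y. 0) else f)" for n
    proof (cases "n = 0")
      case True
      have "min (f y) (real n) = 0" for y using fpos[of y] True by simp
      then show ?thesis using True by auto
    next
      case False
      then have "1 \<le> real n" by simp
      then have "f y \<le> real n" for y using fle[of y] by linarith
      then show ?thesis using False by (auto intro!: ext simp: min_def)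
    qed
    have "resolvent_pos M E (\<alpha> k) f x = (SUP n. ereal (resolvent M E (\<alpha> k) (\<lambda>y. min (f y) (real n)) x))"
      unfolding resolvent_pos_def ..
    also have "\<dots> = (SUP n::nat. (if n = 0 then ereal (h0 k x) else ereal (h k x)))"
    proof -
      have eqfun: "(\<lambda>n. ereal (resolvent M E (\<alpha> k) (\<lambda>y. min (f y) (real n)) x))
          = (\<lambda>n. if n = 0 then ereal (h0 k x) else ereal (h k x))"
        by (rule ext) (simp add: fn h_def h0_def)
      show ?thesis by (simp only: eqfun)
    qed
    also have "\<dots> = max (ereal (h0 k x)) (ereal (h k x))"
    proof (rule antisym)
      show "(SUP n::nat. (if n = 0 then ereal (h0 k x) else ereal (h k x))) \<le> max (ereal (h0 k x)) (ereal (h k x))"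
        by (rule SUP_least) auto
      have "ereal (h0 k x) \<le> (SUP n::nat. (if n = 0 then ereal (h0 k x) else ereal (h k x)))"
      proof -
        have "ereal (h0 k x) = (if (0::nat) = 0 then ereal (h0 k x) else ereal (h k x))" by simp
        also have "\<dots> \<le> (SUP n::nat. (if n = 0 then ereal (h0 k x) else ereal (h k x)))"
          by (rule SUP_upper) simp
        finally show ?thesis .
      qed
      moreover have "ereal (h k x) \<le> (SUP n::nat. (if n = 0 then ereal (h0 k x) else ereal (h k x)))"
      proof -
        have "ereal (h k x) = (if (1::nat) = 0 then ereal (h0 k x) else ereal (h k x))" by simp
        also have "\<dots> \<le> (SUP n::nat. (if n = 0 then ereal (h0 k x) else ereal (h k x)))"
          by (rule SUP_upper) simp
        finally show ?thesis .
      qed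
      ultimately show "max (ereal (h0 k x)) (ereal (h k x)) \<le> (SUP n::nat. (if n = 0 then ereal (h0 k x) else ereal (h k x)))"
        by simp
    qed
    finally show ?thesis .
  qed
  have AEinf: "AE x in M. green M E f x = \<infinity>"
  proof -
    have "AE x in M. \<not> (0 < f x \<and> green M E f x < \<infinity>)"
      using crit fm fi fpos unfolding critical_def by (auto simp: less_imp_le)
    then show ?thesis by (rule AE_mp) (intro AE_I2, use fpos in \<open>auto simp: less_top\<close>)
  qed
  have AEh0: "AE x in M. \<forall>k. h0 k x = 0"
    by (subst AE_all_countable, intro allI ismin_zero[OF h0m apos])
  have AEhp: "AE x in M. \<forall>k. 0 \<le> h k x"
    by (subst AE_all_countable, intro allI ismin_nonneg[OF hm apos Lf]) (use fpos in \<open>simp add: less_imp_le\<close>)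
  have AEev: "AE x in M. eventually (\<lambda>k. c \<le> h k x) sequentially"
    using AEinf AEh0 AEhp
  proof (rule AE_mp[OF _ AE_mp[OF _ AE_mp]], intro AE_I2 impI)
    fix x assume gi: "green M E f x = \<infinity>" and z: "\<forall>k. h0 k x = 0" and p: "\<forall>k. 0 \<le> h k x"
    have "green M E f x = liminf (\<lambda>k. ereal (h k x))"
      unfolding green_def using rp z p by (simp add: \<alpha>_def max_def)
    then have "ereal c < liminf (\<lambda>k. ereal (h k x))" using gi by simp
    then have "eventually (\<lambda>k. ereal c < ereal (h k x)) sequentially" by (rule less_LiminfD)
    then show "eventually (\<lambda>k. c \<le> h k x) sequentially" by eventually_elim simp
  qed
  define T where "T = (\<lambda>k. A \<inter> {x\<in>space M. \<exists>k'. k \<le> k' \<and> h k' x < c})"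
  have Tm[measurable]: "T k \<in> sets M" for k unfolding T_def using A(1) by measurable
  have Tdec: "decseq T" unfolding T_def decseq_def by (auto intro: le_trans)
  have "(\<lambda>k. emeasure M (T k)) \<longlonglongrightarrow> emeasure M (\<Inter>k. T k)"
  proof (rule Lim_emeasure_decseq)
    show "range T \<subseteq> sets M" by auto
    show "decseq T" by (rule Tdec)
    show "emeasure M (T i) \<noteq> \<infinity>" for i
      using A emeasure_mono[of "T i" A M] unfolding T_def by (auto simp: top_unique)
  qed
  moreover have "emeasure M (\<Inter>k. T k) = 0"
  proof -
    have "AE x in M. x \<notin> (\<Inter>k. T k)"
      using AEev
    proof (rule AE_mp, intro AE_I2 impI)
      fix x assume "eventually (\<lambda>k. c \<le> h k x) sequentially"
      then obtain K where K: "\<And>k. K \<le> k \<Longrightarrow> c \<le> h k x" by (auto simp: eventually_sequentially)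
      then show "x \<notin> (\<Inter>k. T k)" unfolding T_def by (auto simp: not_less)
    qed
    moreover have "(\<Inter>k. T k) \<in> sets M" by measurable
    ultimately show ?thesis using AE_iff_null_sets[of "\<Inter>k. T k" M] by (auto dest: null_setsD1)
  qed
  ultimately have "(\<lambda>k. emeasure M (T k)) \<longlonglongrightarrow> 0" by simp
  then have "eventually (\<lambda>k. emeasure M (T k) < ennreal \<delta>) sequentially"
    by (rule order_tendstoD) (use \<delta> in simp)
  then obtain k where Tk: "emeasure M (T k) < ennreal \<delta>" by (auto simp: eventually_sequentially)
  define v where "v = (\<lambda>x. max 0 (min (h k x) c))"
  have vm[measurable]: "v \<in> borel_measurable M" unfolding v_def by measurable
  have Lv: "L2 M v"
  proof (rule L2_bound[OF vm Lh])
    fix x show "\<bar>v x\<bar> \<le> \<bar>h k x\<bar>" unfolding v_def using cpos by (simp add: max_def min_def abs_if)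
  qed
  have Lmin: "L2 M (\<lambda>x. min (h k x) c)"
  proof (rule L2_bound[OF _ Lh])
    show "(\<lambda>x. min (h k x) c) \<in> borel_measurable M" by measurable
    fix x show "\<bar>min (h k x) c\<bar> \<le> \<bar>h k x\<bar>" using cpos by (simp add: min_def abs_if)
  qed
  have Ev: "E v \<le> 1"
  proof -
    have "E v \<le> E (\<lambda>x. min (h k x) c)" unfolding v_def
    proof (rule E_contraction[OF Lmin, of "\<lambda>y. max 0 y"])
      show "\<bar>max 0 s - max 0 t\<bar> \<le> \<bar>s - t\<bar>" for s t :: real by (simp add: max_def abs_if)
      show "(\<lambda>x. max 0 (min (h k x) c)) \<in> borel_measurable M" by measurable
    qed simp
    also have "\<dots> \<le> ennreal (c * integral\<^sup>L M f)"
      by (rule trunc_bound[OF hm apos Lf fi]) (use fpos cpos in \<open>auto simp: less_imp_le\<close>)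
    also have "\<dots> \<le> ennreal 1" using intf by (rule ennreal_leI)
    finally show ?thesis by simp
  qed
  define e where "e = (\<lambda>x. v x / c)"
  have Le: "L2 M e" unfolding e_def by (rule L2_divide[OF Lv])
  have bnd: "\<forall>x\<in>space M. 0 \<le> e x \<and> e x \<le> 1" unfolding e_def v_def using cpos by auto
  have scale: "E (\<lambda>x. t * e x) \<le> ennreal (t / c)" if t: "0 < t" "t \<le> c" for t
  proof -
    have "(\<lambda>x. t * e x) = (\<lambda>x. (t / c) * v x)" unfolding e_def by (rule ext) simp
    then have "E (\<lambda>x. t * e x) = E (\<lambda>x. (t / c) * v x)" by simp
    also have "\<dots> \<le> ennreal (t / c) * E v" by (rule E_scale[OF Lv]) (use t cpos in auto)
    also have "\<dots> \<le> ennreal (t / c) * 1" using Ev by (rule mult_left_mono) simp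
    finally show ?thesis by simp
  qed
  have mod: "e \<in> modular_space M E"
    unfolding modular_space_def
  proof (intro CollectI conjI Le)
    show "((\<lambda>t. E (\<lambda>x. t * e x)) \<longlongrightarrow> 0) (at_right 0)"
    proof (rule tendsto_sandwich[of "\<lambda>t. 0" _ _ "\<lambda>t. ennreal (t / c)"])
      show "\<forall>\<^sub>F t in at_right 0. 0 \<le> E (\<lambda>x. t * e x)" by simp
      have "\<forall>\<^sub>F t in at_right (0::real). 0 < t \<and> t < c"
        using eventually_at_right_less[of "0::real"] eventually_at_right_field[of "\<lambda>t. t < c" 0] cpos
        by (auto intro: eventually_conj)
      then show "\<forall>\<^sub>F t in at_right 0. E (\<lambda>x. t * e x) \<le> ennreal (t / c)"
        by eventually_elim (auto intro: scale)
      have "((\<lambda>t. t / c) \<longlongrightarrow> 0 / c) (at_right (0::real))"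
        by (intro tendsto_intros) (use cpos in auto)
      then show "((\<lambda>t. ennreal (t / c)) \<longlongrightarrow> 0) (at_right 0)"
        using tendsto_ennrealI by fastforce
    qed simp
  qed
  have lux: "luxemburg E e \<le> 1 / c"
  proof (rule lux_le)
    show "0 < 1 / c" using cpos by simp
    have "(\<lambda>x. e x / (1 / c)) = v" unfolding e_def using cpos by (intro ext) simp
    then show "E (\<lambda>x. e x / (1 / c)) \<le> 1" using Ev by simp
  qed
  have sub: "A \<inter> {x\<in>space M. \<bar>e x - 1\<bar> > \<eta>} \<subseteq> T k"
  proof safe
    fix x assume x: "x \<in> A" "x \<in> space M" "\<eta> < \<bar>e x - 1\<bar>"
    have "h k x < c"
    proof (rule ccontr)
      assume "\<not> h k x < c"
      then have "e x = 1" unfolding e_def v_def using cpos by simp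
      then show False using x(3) \<eta> by simp
    qed
    then show "x \<in> T k" unfolding T_def using x by auto
  qed
  have "emeasure M (A \<inter> {x\<in>space M. \<bar>e x - 1\<bar> > \<eta>}) \<le> emeasure M (T k)"
    by (rule emeasure_mono[OF sub]) measurable
  also have "\<dots> \<le> ennreal \<delta>" using Tk by simp
  finally show ?thesis using mod bnd lux by blast
qed

end

context ndf
begin

lemma crit_imp_iii:
  assumes crit: "critical M E"
  shows "\<exists>e :: nat \<Rightarrow> 'a \<Rightarrow> real. (\<forall>n. e n \<in> modular_space M E) \<and>
                 (\<forall>n. \<forall>x\<in>space M. 0 \<le> e n x \<and> e n x \<le> 1) \<and>
                 conv_loc_meas M e (\<lambda>x. 1) \<and>
                 (\<lambda>n. luxemburg E (e n)) \<longlonglongrightarrow> 0"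
proof -
  obtain A :: "nat \<Rightarrow> 'a set" where A: "range A \<subseteq> sets M" "(\<Union>i. A i) = space M"
    "\<And>i. emeasure M (A i) \<noteq> \<infinity>" "incseq A"
    using sigma_finite_incseq by blast
  obtain g :: "'a \<Rightarrow> real" where g: "g \<in> borel_measurable M" "\<And>x. g x > 0" "\<And>x. g x \<le> 1" "integrable M g"
    using obtain_positive_integrable_function by blast
  have "\<forall>m. \<exists>e. e \<in> modular_space M E \<and> (\<forall>x\<in>space M. 0 \<le> e x \<and> e x \<le> 1)
            \<and> luxemburg E e \<le> 1 / real (Suc m)
            \<and> emeasure M (A m \<inter> {x\<in>space M. \<bar>e x - 1\<bar> > 1 / Suc m}) \<le> ennreal (1 / Suc m)"
  proof
    fix m :: nat
    have Am: "A m \<in> sets M" "emeasure M (A m) < \<infinity>" using A(1) A(3)[of m] by (auto simp: less_top)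
    have c: "1 \<le> real (Suc m)" by simp
    have d: "0 < 1 / real (Suc m)" by simp
    have n: "0 \<le> 1 / real (Suc m)" by simp
    show "\<exists>e. e \<in> modular_space M E \<and> (\<forall>x\<in>space M. 0 \<le> e x \<and> e x \<le> 1)
            \<and> luxemburg E e \<le> 1 / real (Suc m)
            \<and> emeasure M (A m \<inter> {x\<in>space M. \<bar>e x - 1\<bar> > 1 / Suc m}) \<le> ennreal (1 / Suc m)"
      by (rule crit_step[OF crit g Am c d n])
  qed
  then have "\<exists>e. \<forall>m. e m \<in> modular_space M E \<and> (\<forall>x\<in>space M. 0 \<le> e m x \<and> e m x \<le> 1)
            \<and> luxemburg E (e m) \<le> 1 / real (Suc m)
            \<and> emeasure M (A m \<inter> {x\<in>space M. \<bar>e m x - 1\<bar> > 1 / Suc m}) \<le> ennreal (1 / Suc m)"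
    by (rule choice)
  then obtain e where eall: "\<forall>m. e m \<in> modular_space M E \<and> (\<forall>x\<in>space M. 0 \<le> e m x \<and> e m x \<le> 1)
            \<and> luxemburg E (e m) \<le> 1 / real (Suc m)
            \<and> emeasure M (A m \<inter> {x\<in>space M. \<bar>e m x - 1\<bar> > 1 / Suc m}) \<le> ennreal (1 / Suc m)" ..
  have e: "\<And>m. e m \<in> modular_space M E" "\<And>m. \<forall>x\<in>space M. 0 \<le> e m x \<and> e m x \<le> 1"
    "\<And>m. luxemburg E (e m) \<le> 1 / real (Suc m)"
    "\<And>m. emeasure M (A m \<inter> {x\<in>space M. \<bar>e m x - 1\<bar> > 1 / Suc m}) \<le> ennreal (1 / Suc m)"
    using eall by simp_all
  have conv: "conv_loc_meas M e (\<lambda>x. 1)"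
    by (rule diag_conv[OF A]) (use e(1,4) in \<open>auto simp: modular_space_def L2_def\<close>)
  have lux: "(\<lambda>n. luxemburg E (e n)) \<longlonglongrightarrow> 0"
  proof (rule tendsto_sandwich[of "\<lambda>n. 0" _ _ "\<lambda>n. 1 / real (Suc n)"])
    show "\<forall>\<^sub>F n in sequentially. 0 \<le> luxemburg E (e n)"
    proof (intro always_eventually allI)
      fix n show "0 \<le> luxemburg E (e n)" by (rule lux_nonneg[of E "e n", OF modular_nonempty[OF e(1)]])
    qed
    show "\<forall>\<^sub>F n in sequentially. luxemburg E (e n) \<le> 1 / real (Suc n)" using e(3) by simp
    show "(\<lambda>n. 1 / real (Suc n)) \<longlonglongrightarrow> 0"
      using LIMSEQ_inverse_real_of_nat by (simp add: inverse_eq_divide)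
  qed simp
  show ?thesis using e(1,2) conv lux by blast
qed

end

theorem theorem4p17:
  fixes M :: "'a measure" and E :: "('a \<Rightarrow> real) \<Rightarrow> ennreal"
  assumes "sigma_finite_measure M"
    and "nonlinear_dirichlet_form M E"
    and "weak_Delta2 M E"
  shows "(critical M E
           \<longleftrightarrow> ((\<lambda>x. 1) \<in> modular_space_e M E \<and> luxemburg (E_e M E) (\<lambda>x. 1) = 0))
       \<and> (critical M E
           \<longleftrightarrow> (\<exists>e :: nat \<Rightarrow> 'a \<Rightarrow> real.
                 (\<forall>n. e n \<in> modular_space M E) \<and>
                 (\<forall>n. \<forall>x\<in>space M. 0 \<le> e n x \<and> e n x \<le> 1) \<and>
                 conv_loc_meas M e (\<lambda>x. 1) \<and>
                 (\<lambda>n. luxemburg E (e n)) \<longlonglongrightarrow> 0))"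
proof -
  interpret ndf M E by (intro ndf.intro ndf_axioms.intro assms(1,2))
  have c3: "critical M E \<longleftrightarrow> (\<exists>e :: nat \<Rightarrow> 'a \<Rightarrow> real.
                 (\<forall>n. e n \<in> modular_space M E) \<and>
                 (\<forall>n. \<forall>x\<in>space M. 0 \<le> e n x \<and> e n x \<le> 1) \<and>
                 conv_loc_meas M e (\<lambda>x. 1) \<and>
                 (\<lambda>n. luxemburg E (e n)) \<longlonglongrightarrow> 0)" (is "_ \<longleftrightarrow> ?R")
  proof
    assume "critical M E" then show ?R by (rule crit_imp_iii)
  next
    assume "\<exists>e :: nat \<Rightarrow> 'a \<Rightarrow> real.
                 (\<forall>n. e n \<in> modular_space M E) \<and>
                 (\<forall>n. \<forall>x\<in>space M. 0 \<le> e n x \<and> e n x \<le> 1) \<and>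
                 conv_loc_meas M e (\<lambda>x. 1) \<and>
                 (\<lambda>n. luxemburg E (e n)) \<longlonglongrightarrow> 0"
    then obtain e :: "nat \<Rightarrow> 'a \<Rightarrow> real" where e: "\<And>n. e n \<in> modular_space M E"
      "\<And>n. \<forall>x\<in>space M. 0 \<le> e n x \<and> e n x \<le> 1" "conv_loc_meas M e (\<lambda>x. 1)"
      "(\<lambda>n. luxemburg E (e n)) \<longlonglongrightarrow> 0" by blast
    show "critical M E" by (rule iii_imp_crit[OF e])
  qed
  have c2: "((\<lambda>x. 1) \<in> modular_space_e M E \<and> luxemburg (E_e M E) (\<lambda>x. 1) = 0) \<longleftrightarrow> (\<exists>e :: nat \<Rightarrow> 'a \<Rightarrow> real.
                 (\<forall>n. e n \<in> modular_space M E) \<and>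
                 (\<forall>n. \<forall>x\<in>space M. 0 \<le> e n x \<and> e n x \<le> 1) \<and>
                 conv_loc_meas M e (\<lambda>x. 1) \<and>
                 (\<lambda>n. luxemburg E (e n)) \<longlonglongrightarrow> 0)" (is "_ \<longleftrightarrow> ?R")
  proof
    assume "(\<lambda>x. 1) \<in> modular_space_e M E \<and> luxemburg (E_e M E) (\<lambda>x. 1) = 0"
    then show ?R using ii_imp_iii by blast
  next
    assume "\<exists>e :: nat \<Rightarrow> 'a \<Rightarrow> real.
                 (\<forall>n. e n \<in> modular_space M E) \<and>
                 (\<forall>n. \<forall>x\<in>space M. 0 \<le> e n x \<and> e n x \<le> 1) \<and>
                 conv_loc_meas M e (\<lambda>x. 1) \<and>
                 (\<lambda>n. luxemburg E (e n)) \<longlonglongrightarrow> 0"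
    then obtain e :: "nat \<Rightarrow> 'a \<Rightarrow> real" where e: "\<And>n. e n \<in> modular_space M E"
      "conv_loc_meas M e (\<lambda>x. 1)"
      "(\<lambda>n. luxemburg E (e n)) \<longlonglongrightarrow> 0" by blast
    show "(\<lambda>x. 1) \<in> modular_space_e M E \<and> luxemburg (E_e M E) (\<lambda>x. 1) = 0"
      by (rule iii_imp_ii[OF e])
  qed
  show ?thesis using c2 c3 by blast
qed


end
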